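(* Let $G={\rm Spin}_{2r}$ ($r\ge4$), with $\Delta$ of type $D_r$, and $S_1=\{\alpha_1\}$. Then $$\mathcal P_{G,S_1}(X)=\frac{(X-1)\big((2r-1)X+(r-1)(2r-3)\big)}{|W|}\prod_{a=1}^{r-2}(X+2a-1)\in\mathbb Q[X],$$ where $|W|=2^{r-1}r!$.
   Context: $W$ is the Weyl group of type $D_r$ with simple roots $\alpha_1,\dots,\alpha_r$ in Bourbaki labelling. $d(w)$ is the dimension of the fixed space of $w$ on the reflection representation. ${\rm Desc}_L(w)=\{\alpha:l(s_\alpha w)<l(w)\}$, $\mathcal C_S=\{w:{\rm Desc}_L(w)=S\}$, $\sigma_S$ the direct sum of Kazhdan–Lusztig right cell representations of right cells contained in $\mathcal C_S$ (for $S=S_1$ one has $\sigma_{S_1}={\rm Ind}_{W(\Delta\setminus S_1)}^W\mathbf 1-\mathbf 1_W$ in the Grothendieck group), and $\mathcal P_{G,S}(X)=\frac1{|W|}\sum_{w\in W}\chi_{\sigma_S}(w)X^{d(w)}$. *)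

theory Defs
  imports "Jordan_Normal_Form.Matrix_Kernel" "HOL-Computational_Algebra.Polynomial"
begin

text \<open>Reflection representation of the Weyl group of type D_r on R^r,
  coordinates e_0,...,e_(r-1).  Bourbaki simple roots:
  alpha_k = e_(k-1) - e_k for 1 <= k <= r-1, and alpha_r = e_(r-2) + e_(r-1).\<close>

definition simple_root_D :: "nat \<Rightarrow> nat \<Rightarrow> real vec" where
  "simple_root_D r k =
     (if k < r then vec r (\<lambda>i. if i = k - 1 then 1 else if i = k then -1 else 0)
      else vec r (\<lambda>i. if i = r - 2 \<or> i = r - 1 then 1 else 0))"

definition reflection_mat :: "nat \<Rightarrow> real vec \<Rightarrow> real mat" where
  "reflection_mat r a =
     mat r r (\<lambda>(i,j). (if i = j then 1 else 0) - 2 * (a $ i) * (a $ j) / (a \<bullet> a))"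

inductive_set refl_group :: "nat \<Rightarrow> nat set \<Rightarrow> real mat set" for r S where
  one: "1\<^sub>m r \<in> refl_group r S"
| step: "w \<in> refl_group r S \<Longrightarrow> k \<in> S \<Longrightarrow>
           reflection_mat r (simple_root_D r k) * w \<in> refl_group r S"

definition weyl_D :: "nat \<Rightarrow> real mat set" where
  "weyl_D r = refl_group r {1..r}"

definition parabolic_D1 :: "nat \<Rightarrow> real mat set" where
  "parabolic_D1 r = refl_group r {2..r}"

definition fixdim :: "nat \<Rightarrow> real mat \<Rightarrow> nat" where
  "fixdim r w = kernel_dim (w - 1\<^sub>m r)"

definition left_cosets_D1 :: "nat \<Rightarrow> real mat set set" where
  "left_cosets_D1 r = {(\<lambda>h. g * h) ` parabolic_D1 r | g. g \<in> weyl_D r}"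

text \<open>Character of sigma_(S_1) = Ind_(W(Delta - S_1))^W 1 - 1_W.\<close>
definition chi_sigma_S1 :: "nat \<Rightarrow> real mat \<Rightarrow> int" where
  "chi_sigma_S1 r w =
     int (card {C \<in> left_cosets_D1 r. (\<lambda>h. w * h) ` C = C}) - 1"

definition P_S1 :: "nat \<Rightarrow> rat poly" where
  "P_S1 r = Polynomial.smult (1 / of_nat (card (weyl_D r)))
     (\<Sum>w\<in>weyl_D r. Polynomial.smult (of_int (chi_sigma_S1 r w)) (monom 1 (fixdim r w)))"

end

theory Submission
  imports Defs "HOL-Combinatorics.Permutations"
begin


type_synonym sp = "(nat \<Rightarrow> nat) \<times> (nat \<Rightarrow> real)"

definition spm :: "nat \<Rightarrow> sp \<Rightarrow> real mat" where
  "spm n x = mat n n (\<lambda>(i,k). if i = fst x k then snd x k else 0)"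

definition pmul :: "sp \<Rightarrow> sp \<Rightarrow> sp" where
  "pmul x y = (fst x \<circ> fst y, \<lambda>k. snd x (fst y k) * snd y k)"

definition SP :: "nat \<Rightarrow> sp set" where
  "SP n = {x. fst x permutes {..<n} \<and> (\<forall>i. snd x i = 1 \<or> snd x i = -1) \<and> (\<forall>i\<ge>n. snd x i = 1)}"

lemma SP_D:
  assumes "x \<in> SP n"
  shows "fst x permutes {..<n}" "snd x i = 1 \<or> snd x i = -1" "i \<ge> n \<Longrightarrow> snd x i = 1"
    "i \<ge> n \<Longrightarrow> fst x i = i" "i < n \<Longrightarrow> fst x i < n" "snd x i * snd x i = 1" "snd x i \<noteq> 0"
proof -
  show p: "fst x permutes {..<n}" and s: "snd x i = 1 \<or> snd x i = -1" using assms unfolding SP_def by auto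
  show "i \<ge> n \<Longrightarrow> snd x i = 1" using assms unfolding SP_def by auto
  show "i \<ge> n \<Longrightarrow> fst x i = i" using permutes_not_in[OF p] by simp
  show "i < n \<Longrightarrow> fst x i < n" using permutes_in_image[OF p] by simp
  show "snd x i * snd x i = 1" using s by auto
  show "snd x i \<noteq> 0" using s by auto
qed

lemma spm_carrier[simp]: "spm n x \<in> carrier_mat n n"
  unfolding spm_def by auto

lemma spm_index[simp]: "i < n \<Longrightarrow> k < n \<Longrightarrow> spm n x $$ (i,k) = (if i = fst x k then snd x k else 0)"
  unfolding spm_def by auto

lemma spm_dim[simp]: "dim_row (spm n x) = n" "dim_col (spm n x) = n"
  unfolding spm_def by auto

lemma pmul_SP: "x \<in> SP n \<Longrightarrow> y \<in> SP n \<Longrightarrow> pmul x y \<in> SP n"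
proof -
  assume x: "x \<in> SP n" and y: "y \<in> SP n"
  have "fst (pmul x y) permutes {..<n}" unfolding pmul_def
    using permutes_compose[OF SP_D(1)[OF y] SP_D(1)[OF x]] by simp
  moreover have "snd (pmul x y) i = 1 \<or> snd (pmul x y) i = -1" for i
    using SP_D(2)[OF x, of "fst y i"] SP_D(2)[OF y, of i] unfolding pmul_def by auto
  moreover have "i \<ge> n \<Longrightarrow> snd (pmul x y) i = 1" for i
    using SP_D(3,4)[OF x] SP_D(3,4)[OF y] unfolding pmul_def by auto
  ultimately show ?thesis unfolding SP_def by auto
qed

lemma spm_mult:
  assumes x: "x \<in> SP n" and y: "y \<in> SP n"
  shows "spm n x * spm n y = spm n (pmul x y)"
proof (rule eq_matI)
  fix i k assume i: "i < dim_row (spm n (pmul x y))" and k: "k < dim_col (spm n (pmul x y))"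
  hence i: "i < n" and k: "k < n" by auto
  have qk: "fst y k < n" using SP_D(5)[OF y k] .
  have "(spm n x * spm n y) $$ (i,k) = (\<Sum>l\<in>{0..<n}. spm n x $$ (i,l) * spm n y $$ (l,k))"
    using i k by (simp add: scalar_prod_def)
  also have "\<dots> = (\<Sum>l\<in>{0..<n}. if l = fst y k then (if i = fst x l then snd x l else 0) * snd y k else 0)"
    by (rule sum.cong) (auto simp: i k)
  also have "\<dots> = (if i = fst x (fst y k) then snd x (fst y k) else 0) * snd y k"
    using qk by (simp add: sum.delta)
  also have "\<dots> = spm n (pmul x y) $$ (i,k)" using i k by (simp add: pmul_def)
  finally show "(spm n x * spm n y) $$ (i,k) = spm n (pmul x y) $$ (i,k)" .
qed auto

definition pid :: sp where "pid = (id, \<lambda>_. 1)"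

lemma pid_SP[simp]: "pid \<in> SP n" unfolding pid_def SP_def by (auto simp: permutes_id)

lemma spm_pid: "spm n pid = 1\<^sub>m n"
  by (rule eq_matI) (auto simp: pid_def)

lemma spm_inj:
  assumes x: "x \<in> SP n" and y: "y \<in> SP n" and eq: "spm n x = spm n y"
  shows "x = y"
proof -
  have "fst x k = fst y k \<and> snd x k = snd y k" for k
  proof (cases "k < n")
    case True
    have "spm n x $$ (fst x k, k) = spm n y $$ (fst x k, k)" using eq by simp
    hence "snd x k = (if fst x k = fst y k then snd y k else 0)"
      using True SP_D(5)[OF x True] by simp
    thus ?thesis using SP_D(7)[OF x, of k] by (auto split: if_splits)
  next
    case False
    thus ?thesis using SP_D(3,4)[OF x] SP_D(3,4)[OF y] by auto
  qed
  thus ?thesis by (simp add: prod_eq_iff fun_eq_iff)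
qed


definition fixm :: "nat \<Rightarrow> sp \<Rightarrow> sp" where
  "fixm n x = (fst x, (snd x)(n := -1))"

definition ins :: "nat \<Rightarrow> sp \<Rightarrow> nat \<Rightarrow> real \<Rightarrow> sp" where
  "ins n x j \<sigma> = (fst x \<circ> transpose j n, (snd x)(j := \<sigma>, n := \<sigma> * snd x j))"

lemma SP_Suc_mono: "x \<in> SP n \<Longrightarrow> x \<in> SP (Suc n)"
  unfolding SP_def by (auto intro: permutes_subset)

lemma fixm_SP: "x \<in> SP n \<Longrightarrow> fixm n x \<in> SP (Suc n)"
  unfolding SP_def fixm_def by (auto intro: permutes_subset)

lemma ins_SP:
  assumes x: "x \<in> SP n" and j: "j < n" and s: "\<sigma> = 1 \<or> \<sigma> = -1"
  shows "ins n x j \<sigma> \<in> SP (Suc n)"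
proof -
  have "fst x permutes {..<Suc n}" using SP_D(1)[OF x] by (rule permutes_subset) auto
  moreover have "transpose j n permutes {..<Suc n}" using j by (intro permutes_swap_id) auto
  ultimately have "fst x \<circ> transpose j n permutes {..<Suc n}" by (rule permutes_compose[rotated])
  moreover have "snd (ins n x j \<sigma>) i = 1 \<or> snd (ins n x j \<sigma>) i = -1" for i
    using s SP_D(2)[OF x, of j] SP_D(2)[OF x, of i] unfolding ins_def by auto
  moreover have "i \<ge> Suc n \<Longrightarrow> snd (ins n x j \<sigma>) i = 1" for i
    using SP_D(3)[OF x, of i] j unfolding ins_def by auto
  ultimately show ?thesis unfolding SP_def ins_def by auto
qed

lemma SP_fst_n: "x \<in> SP n \<Longrightarrow> fst x n = n" using SP_D(4) by auto
lemma SP_snd_n: "x \<in> SP n \<Longrightarrow> snd x n = 1" using SP_D(3) by auto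

lemma ins_fst_n: "x \<in> SP n \<Longrightarrow> j < n \<Longrightarrow> fst (ins n x j \<sigma>) n = fst x j"
  unfolding ins_def by simp

lemma ins_fst_j: "x \<in> SP n \<Longrightarrow> j < n \<Longrightarrow> fst (ins n x j \<sigma>) j = n"
  unfolding ins_def using SP_fst_n by simp

lemma ins_snd_j: "j < n \<Longrightarrow> snd (ins n x j \<sigma>) j = \<sigma>"
  unfolding ins_def by simp

lemma ins_inj:
  assumes x: "x \<in> SP n" and j: "j < n" and y: "y \<in> SP n" and k: "k < n"
    and eq: "ins n x j \<sigma> = ins n y k \<tau>" and s: "\<sigma> = 1 \<or> \<sigma> = -1"
  shows "x = y \<and> j = k \<and> \<sigma> = \<tau>"
proof -
  have jk: "j = k"
  proof (rule ccontr)
    assume "j \<noteq> k"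
    have "fst (ins n y k \<tau>) j = fst y j" unfolding ins_def using \<open>j \<noteq> k\<close> j by (simp add: transpose_def)
    moreover have "fst (ins n x j \<sigma>) j = n" by (rule ins_fst_j[OF x j])
    ultimately have "fst y j = n" using eq by simp
    thus False using SP_D(5)[OF y j] by simp
  qed
  have st: "\<sigma> = \<tau>" using ins_snd_j[of j n x \<sigma>] ins_snd_j[of k n y \<tau>] eq jk j by simp
  have f: "fst x = fst y"
  proof
    fix i
    have "fst (ins n x j \<sigma>) (transpose j n i) = fst (ins n y j \<sigma>) (transpose j n i)" using eq jk st by simp
    thus "fst x i = fst y i" unfolding ins_def by simp
  qed
  have "snd x = snd y"
  proof
    fix i
    have e: "snd (ins n x j \<sigma>) i = snd (ins n y j \<sigma>) i" "snd (ins n x j \<sigma>) n = snd (ins n y j \<sigma>) n"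
      using eq jk st by simp_all
    show "snd x i = snd y i"
    proof (cases "i = j")
      case True
      have "\<sigma> * snd x j = \<sigma> * snd y j" using e(2) j unfolding ins_def by simp
      moreover have "\<sigma> \<noteq> 0" using s by auto
      ultimately show ?thesis using True by simp
    next
      case False
      show ?thesis
      proof (cases "i = n")
        case True thus ?thesis using SP_snd_n x y by simp
      next
        case False
        thus ?thesis using e(1) \<open>i \<noteq> j\<close> unfolding ins_def by simp
      qed
    qed
  qed
  show ?thesis using f \<open>snd x = snd y\<close> jk st by (simp add: prod_eq_iff)
qed

lemma fixm_inj: "x \<in> SP n \<Longrightarrow> y \<in> SP n \<Longrightarrow> fixm n x = fixm n y \<Longrightarrow> x = y"
  unfolding fixm_def
  by (auto simp: prod_eq_iff fun_eq_iff SP_snd_n) (metis SP_snd_n fun_upd_other)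

lemma SP_Suc_cases:
  assumes y: "y \<in> SP (Suc n)"
  shows "y \<in> SP n \<or> (\<exists>x\<in>SP n. y = fixm n x) \<or> (\<exists>x\<in>SP n. \<exists>j<n. \<exists>\<sigma>. (\<sigma> = 1 \<or> \<sigma> = -1) \<and> y = ins n x j \<sigma>)"
proof -
  have p: "fst y permutes {..<Suc n}" using SP_D(1)[OF y] .
  show ?thesis
  proof (cases "fst y n = n")
    case True
    have p': "fst y permutes {..<n}"
      using permutes_superset[OF p] True by (metis Diff_iff lessThan_iff less_SucE)
    show ?thesis
    proof (cases "snd y n = 1")
      case True
      have "y \<in> SP n" using p' True y unfolding SP_def
        by (auto simp: le_less Suc_le_eq) (metis Suc_leI le_neq_implies_less)
      thus ?thesis by simp
    next
      case False
      hence m: "snd y n = -1" using SP_D(2)[OF y, of n] by auto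
      define x where "x = (fst y, (snd y)(n := 1))"
      have "x \<in> SP n" using p' y unfolding SP_def x_def
        by (auto simp: le_less Suc_le_eq) (metis Suc_leI le_neq_implies_less)
      moreover have "y = fixm n x" using m unfolding fixm_def x_def by (auto simp: prod_eq_iff)
      ultimately show ?thesis by blast
    qed
  next
    case False
    obtain j where j: "fst y j = n" using permutes_surj[OF p] by (metis surj_def)
    have jn: "j \<noteq> n" using False j by auto
    have jlt: "j < n"
    proof (rule ccontr)
      assume "\<not> j < n"
      hence "j \<ge> Suc n" using jn by auto
      hence "fst y j = j" using SP_D(4)[OF y] by simp
      thus False using j \<open>j \<ge> Suc n\<close> by simp
    qed
    define p where "p = fst y \<circ> transpose j n"
    define s where "s = (snd y)(j := snd y j * snd y n, n := 1)"
    have pn: "p n = n" unfolding p_def using j by simp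
    have pp: "p permutes {..<Suc n}" unfolding p_def
      using permutes_compose[OF _ p] jlt by (intro permutes_compose[OF permutes_swap_id p]) auto
    have pp': "p permutes {..<n}"
      using permutes_superset[OF pp] pn by (metis Diff_iff lessThan_iff less_SucE)
    have x: "(p, s) \<in> SP n" unfolding SP_def
    proof (intro CollectI conjI allI impI; simp only: fst_conv snd_conv)
      show "p permutes {..<n}" by (rule pp')
      fix i
      show "s i = 1 \<or> s i = -1" unfolding s_def using SP_D(2)[OF y, of j] SP_D(2)[OF y, of n] SP_D(2)[OF y, of i]
        by auto
      assume "n \<le> i" thus "s i = 1" unfolding s_def using SP_D(3)[OF y, of i] jlt by auto
    qed
    have sig: "snd y j = 1 \<or> snd y j = -1" by (rule SP_D(2)[OF y])
    have "ins n (p, s) j (snd y j) = y"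
    proof -
      have "fst (ins n (p, s) j (snd y j)) = fst y" unfolding ins_def p_def
        by (auto simp: fun_eq_iff)
      moreover have "snd (ins n (p, s) j (snd y j)) = snd y" unfolding ins_def s_def
        using jlt SP_D(6)[OF y, of j] by (auto simp: fun_eq_iff)
      ultimately show ?thesis by (simp add: prod_eq_iff)
    qed
    thus ?thesis using x jlt sig by metis
  qed
qed

lemma SP_Suc: "SP (Suc n) = SP n \<union> fixm n ` SP n \<union> (\<lambda>(x,j,\<sigma>). ins n x j \<sigma>) ` (SP n \<times> {..<n} \<times> {1,-1})"
proof
  show "SP (Suc n) \<subseteq> SP n \<union> fixm n ` SP n \<union> (\<lambda>(x,j,\<sigma>). ins n x j \<sigma>) ` (SP n \<times> {..<n} \<times> {1,-1})"
  proof
    fix y assume "y \<in> SP (Suc n)"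
    from SP_Suc_cases[OF this] show "y \<in> SP n \<union> fixm n ` SP n \<union> (\<lambda>(x,j,\<sigma>). ins n x j \<sigma>) ` (SP n \<times> {..<n} \<times> {1,-1})"
      by (elim disjE bexE exE conjE) force+
  qed
  show "SP n \<union> fixm n ` SP n \<union> (\<lambda>(x,j,\<sigma>). ins n x j \<sigma>) ` (SP n \<times> {..<n} \<times> {1,-1}) \<subseteq> SP (Suc n)"
    using SP_Suc_mono fixm_SP ins_SP by auto
qed

lemma finite_SP: "finite (SP n)"
proof (induction n)
  case 0
  have "SP 0 = {pid}"
  proof -
    have "x = pid" if "x \<in> SP 0" for x
    proof -
      have "fst x = id" using SP_D(4)[OF that] by auto
      moreover have "snd x = (\<lambda>_. 1)" using SP_D(3)[OF that] by auto
      ultimately show ?thesis unfolding pid_def by (simp add: prod_eq_iff)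
    qed
    thus ?thesis using pid_SP by blast
  qed
  thus ?case by simp
next
  case (Suc n)
  thus ?case unfolding SP_Suc by auto
qed

lemma sum_SP_Suc:
  fixes g :: "sp \<Rightarrow> 'a :: comm_monoid_add"
  shows "(\<Sum>x\<in>SP (Suc n). g x) = (\<Sum>x\<in>SP n. g x + g (fixm n x) + (\<Sum>j<n. g (ins n x j 1) + g (ins n x j (-1))))"
proof -
  let ?A = "SP n" and ?B = "fixm n ` SP n" and ?C = "(\<lambda>(x,j,\<sigma>). ins n x j \<sigma>) ` (SP n \<times> {..<n} \<times> {1::real,-1})"
  have fA: "finite ?A" by (rule finite_SP)
  have fB: "finite ?B" using fA by simp
  have fC: "finite ?C" using fA by simp
  have dAB: "?A \<inter> ?B = {}" unfolding fixm_def using SP_snd_n by force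
  have dABC: "(?A \<union> ?B) \<inter> ?C = {}"
  proof -
    have "fst z n \<noteq> n" if "z \<in> ?C" for z
      using that ins_fst_n SP_D(5) by fastforce
    moreover have "fst z n = n" if "z \<in> ?A \<union> ?B" for z
      using that by (metis SP_fst_n Un_iff fixm_def fst_conv imageE)
    ultimately show ?thesis by blast
  qed
  have iB: "inj_on (fixm n) ?A" using fixm_inj by (meson inj_onI)
  have iC: "inj_on (\<lambda>(x,j,\<sigma>). ins n x j \<sigma>) (SP n \<times> {..<n} \<times> {1::real,-1})"
    by (rule inj_onI) (auto dest: ins_inj)
  have "(\<Sum>x\<in>SP (Suc n). g x) = sum g ?A + sum g ?B + sum g ?C"
    unfolding SP_Suc using fA fB fC dAB dABC by (simp add: sum.union_disjoint)
  also have "sum g ?B = (\<Sum>x\<in>SP n. g (fixm n x))" using sum.reindex[OF iB] by simp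
  also have "sum g ?C = (\<Sum>(x,j,\<sigma>)\<in>SP n \<times> {..<n} \<times> {1::real,-1}. g (ins n x j \<sigma>))"
    using sum.reindex[OF iC] by (simp add: case_prod_unfold)
  also have "\<dots> = (\<Sum>x\<in>SP n. \<Sum>j<n. g (ins n x j 1) + g (ins n x j (-1)))"
    by (simp add: sum.cartesian_product[symmetric])
  finally show ?thesis by (simp add: sum.distrib)
qed


definition dd :: "nat \<Rightarrow> sp \<Rightarrow> nat" where
  "dd n x = kernel_dim (spm n x - 1\<^sub>m n)"

definition blk :: "nat \<Rightarrow> sp \<Rightarrow> real \<Rightarrow> real mat" where
  "blk n x c = four_block_mat (spm n x - 1\<^sub>m n) (0\<^sub>m n 1) (0\<^sub>m 1 n) (mat 1 1 (\<lambda>_. c))"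

lemma blk_carrier[simp]: "blk n x c \<in> carrier_mat (Suc n) (Suc n)"
  unfolding blk_def by (rule four_block_carrier_mat[of _ n n _ 1 1, simplified]) auto

lemma blk_dim[simp]: "dim_row (blk n x c) = Suc n" "dim_col (blk n x c) = Suc n"
  by (metis blk_carrier carrier_matD(1)) (metis blk_carrier carrier_matD(2))

lemma blk_index: "i < Suc n \<Longrightarrow> k < Suc n \<Longrightarrow> blk n x c $$ (i,k) =
   (if i < n \<and> k < n then (if i = fst x k then snd x k else 0) - (if i = k then 1 else 0)
    else if i = n \<and> k = n then c else 0)"
  unfolding blk_def by (auto simp: less_Suc_eq)

lemma kdim_1x1: "kernel.dim 1 (mat 1 1 (\<lambda>_. c :: real)) = (if c = 0 then 1 else 0)"
proof (cases "c = 0")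
  case True
  let ?A = "mat 1 1 (\<lambda>_. c :: real)"
  have A: "?A \<in> carrier_mat 1 1" by auto
  have "pivot_fun ?A (\<lambda>_. 1) 1" by (rule pivot_funI) (auto simp: True)
  hence ref: "row_echelon_form ?A" unfolding row_echelon_form_def by auto
  have r0: "row ?A 0 = 0\<^sub>v 1" using True by (intro eq_vecI) auto
  have e: "{i. i < 1 \<and> row ?A i \<noteq> 0\<^sub>v 1} = {}" using r0 by auto
  have "kernel.dim 1 ?A = 1 - card {i. i < 1 \<and> row ?A i \<noteq> 0\<^sub>v 1}" by (rule find_base_vectors(6)[OF ref A])
  hence "kernel.dim 1 ?A = 1" unfolding e by simp
  thus ?thesis using True by simp
next
  case False
  let ?A = "mat 1 1 (\<lambda>_. c :: real)"
  have A: "?A \<in> carrier_mat 1 1" by auto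
  have "upper_triangular ?A" unfolding upper_triangular_def by auto
  moreover have "0 \<notin> set (diag_mat ?A)" using False by (auto simp: diag_mat_def)
  ultimately show ?thesis using kernel_upper_triangular(1)[OF A] False by simp
qed

lemma kernel_dim_blk: "kernel_dim (blk n x c) = dd n x + (if c = 0 then 1 else 0)"
proof -
  have "kernel_dim (blk n x c) = kernel.dim (n + 1) (blk n x c)"
    unfolding kernel_dim_def by simp
  also have "\<dots> = kernel.dim n (spm n x - 1\<^sub>m n) + kernel.dim 1 (mat 1 1 (\<lambda>_. c))"
    by (rule kernel_four_block_0_mat[OF blk_def]) auto
  also have "kernel.dim n (spm n x - 1\<^sub>m n) = dd n x" unfolding dd_def kernel_dim_def by simp
  finally show ?thesis using kdim_1x1 by simp
qed

lemma dd_Suc_same: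
  assumes x: "x \<in> SP n"
  shows "dd (Suc n) x = dd n x + 1"
proof -
  have "spm (Suc n) x - 1\<^sub>m (Suc n) = blk n x 0"
    using SP_D(5)[OF x] by (intro eq_matI) (auto simp: blk_index SP_fst_n[OF x] SP_snd_n[OF x] less_Suc_eq)
  thus ?thesis unfolding dd_def[of "Suc n"] using kernel_dim_blk[of n x 0] by simp
qed

lemma dd_fixm:
  assumes x: "x \<in> SP n"
  shows "dd (Suc n) (fixm n x) = dd n x"
proof -
  have "spm (Suc n) (fixm n x) - 1\<^sub>m (Suc n) = blk n x (-2)"
    using SP_D(5)[OF x] by (intro eq_matI) (auto simp: blk_index fixm_def SP_fst_n[OF x] less_Suc_eq)
  thus ?thesis unfolding dd_def[of "Suc n"] using kernel_dim_blk[of n x "-2"] by simp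
qed

definition emat :: "nat \<Rightarrow> nat \<Rightarrow> nat \<Rightarrow> real \<Rightarrow> real mat" where
  "emat m a b c = mat m m (\<lambda>(l,k). (if l = k then 1 else 0) + (if l = a \<and> k = b then c else 0))"

definition dmat :: "nat \<Rightarrow> nat \<Rightarrow> real mat" where
  "dmat m a = mat m m (\<lambda>(l,k). if l = k then (if l = a then -1 else 1) else 0)"

lemma emat_carrier[simp]: "emat m a b c \<in> carrier_mat m m" unfolding emat_def by auto
lemma dmat_carrier[simp]: "dmat m a \<in> carrier_mat m m" unfolding dmat_def by auto

lemma emat_dim[simp]: "dim_row (emat m a b c) = m" "dim_col (emat m a b c) = m" by (simp_all add: emat_def)
lemma dmat_dim[simp]: "dim_row (dmat m a) = m" "dim_col (dmat m a) = m" by (simp_all add: dmat_def)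

lemma emat_right:
  assumes A: "A \<in> carrier_mat m m" and ab: "a < m" "b < m" "a \<noteq> b" and i: "i < m" and k: "k < m"
  shows "(A * emat m a b c) $$ (i,k) = A $$ (i,k) + (if k = b then c * A $$ (i,a) else 0)"
proof -
  have "(A * emat m a b c) $$ (i,k) = (\<Sum>l\<in>{0..<m}. A $$ (i,l) * emat m a b c $$ (l,k))"
    using A i k by (simp add: scalar_prod_def emat_def)
  also have "\<dots> = (\<Sum>l\<in>{0..<m}. (if l = k then A $$ (i,l) else 0) + (if l = a then (if k = b then c * A $$ (i,l) else 0) else 0))"
    using k ab by (intro sum.cong) (auto simp: emat_def)
  also have "\<dots> = A $$ (i,k) + (if k = b then c * A $$ (i,a) else 0)"
    using k ab by (simp add: sum.distrib algebra_simps)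
  finally show ?thesis .
qed

lemma emat_left:
  assumes A: "A \<in> carrier_mat m m" and ab: "a < m" "b < m" "a \<noteq> b" and i: "i < m" and k: "k < m"
  shows "(emat m a b c * A) $$ (i,k) = A $$ (i,k) + (if i = a then c * A $$ (b,k) else 0)"
proof -
  have "(emat m a b c * A) $$ (i,k) = (\<Sum>l\<in>{0..<m}. emat m a b c $$ (i,l) * A $$ (l,k))"
    using A i k by (simp add: scalar_prod_def emat_def)
  also have "\<dots> = (\<Sum>l\<in>{0..<m}. (if l = i then A $$ (l,k) else 0) + (if l = b then (if i = a then c * A $$ (l,k) else 0) else 0))"
    using i ab by (intro sum.cong) (auto simp: emat_def)
  also have "\<dots> = A $$ (i,k) + (if i = a then c * A $$ (b,k) else 0)"
    using i ab by (simp add: sum.distrib algebra_simps)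
  finally show ?thesis .
qed

lemma dmat_left:
  assumes A: "A \<in> carrier_mat m m" and i: "i < m" and k: "k < m"
  shows "(dmat m a * A) $$ (i,k) = (if i = a then -1 else 1) * A $$ (i,k)"
proof -
  have "(dmat m a * A) $$ (i,k) = (\<Sum>l\<in>{0..<m}. dmat m a $$ (i,l) * A $$ (l,k))"
    using A i k by (simp add: scalar_prod_def dmat_def)
  also have "\<dots> = (\<Sum>l\<in>{0..<m}. if l = i then (if i = a then -1 else 1) * A $$ (l,k) else 0)"
    using i by (intro sum.cong) (auto simp: dmat_def)
  also have "\<dots> = (if i = a then -1 else 1) * A $$ (i,k)"
    using i by simp
  finally show ?thesis .
qed

lemma emat_inv:
  assumes ab: "a < m" "b < m" "a \<noteq> b"
  shows "emat m a b c * emat m a b (-c) = 1\<^sub>m m"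
proof (rule eq_matI)
  fix i k assume i: "i < dim_row (1\<^sub>m m)" and k: "k < dim_col (1\<^sub>m m)"
  hence i: "i < m" and k: "k < m" by auto
  show "(emat m a b c * emat m a b (-c)) $$ (i,k) = 1\<^sub>m m $$ (i,k)"
    using emat_right[OF emat_carrier ab i k, of a b c "-c"] ab i k by (simp add: emat_def)
qed auto

lemma dmat_inv: "dmat m a * dmat m a = 1\<^sub>m m"
proof (rule eq_matI)
  fix i k assume i: "i < dim_row (1\<^sub>m m)" and k: "k < dim_col (1\<^sub>m m)"
  hence i: "i < m" and k: "k < m" by auto
  show "(dmat m a * dmat m a) $$ (i,k) = 1\<^sub>m m $$ (i,k)"
    using dmat_left[OF dmat_carrier i k] i k by (simp add: dmat_def)
qed auto

lemma ins_matrix: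
  assumes x: "x \<in> SP n" and j: "j < n" and s: "\<sigma> = 1 \<or> \<sigma> = -1"
  shows "spm (Suc n) (ins n x j \<sigma>) - 1\<^sub>m (Suc n) =
    dmat (Suc n) n * (emat (Suc n) (fst x j) n (\<sigma> * snd x j) * (blk n x 1 * emat (Suc n) n j (-\<sigma>)))"
    (is "?M = ?R")
proof (rule eq_matI)
  fix i k assume "i < dim_row ?R" "k < dim_col ?R"
  hence i: "i < Suc n" and k: "k < Suc n" by auto
  have pj: "fst x j < n" using SP_D(5)[OF x j] .
  have pinj: "fst x a = fst x b \<Longrightarrow> a = b" for a b using permutes_inj[OF SP_D(1)[OF x]] by (meson injD)
  have pn: "fst x a < n" if "a < n" for a using SP_D(5)[OF x that] .
  have pnn: "fst x n = n" using SP_fst_n[OF x] .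
  have YR: "(blk n x 1 * emat (Suc n) n j (-\<sigma>)) $$ (a,b) =
     blk n x 1 $$ (a,b) + (if b = j then -\<sigma> * blk n x 1 $$ (a,n) else 0)" if "a < Suc n" "b < Suc n" for a b
    by (rule emat_right) (use j that in auto)
  have LZ: "(emat (Suc n) (fst x j) n (\<sigma> * snd x j) * (blk n x 1 * emat (Suc n) n j (-\<sigma>))) $$ (a,b) =
     (blk n x 1 * emat (Suc n) n j (-\<sigma>)) $$ (a,b) + (if a = fst x j then \<sigma> * snd x j * (blk n x 1 * emat (Suc n) n j (-\<sigma>)) $$ (n,b) else 0)"
    if "a < Suc n" "b < Suc n" for a b
    by (rule emat_left) (use pj that in auto)
  have D: "?R $$ (i,k) = (if i = n then -1 else 1) *
     (emat (Suc n) (fst x j) n (\<sigma> * snd x j) * (blk n x 1 * emat (Suc n) n j (-\<sigma>))) $$ (i,k)"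
    by (rule dmat_left) (use i k in auto)
  have lhs: "?M $$ (i,k) = (if i = fst x (transpose j n k) then ((snd x)(j := \<sigma>, n := \<sigma> * snd x j)) k else 0) - (if i = k then 1 else 0)"
    using i k by (simp add: ins_def)
  have bn: "blk n x 1 $$ (a, n) = (if a = n then 1 else 0)" if "a < Suc n" for a
    using that pnn by (simp add: blk_index)
  have nb: "blk n x 1 $$ (n, b) = (if b = n then 1 else 0)" if "b < Suc n" for b
    using that by (simp add: blk_index)
  have R: "?R $$ (i,k) = (if i = n then -1 else 1) *
     ((blk n x 1 $$ (i,k) + (if k = j then -\<sigma> * (if i = n then 1 else 0) else 0)) +
      (if i = fst x j then \<sigma> * snd x j * ((if k = n then 1 else 0) + (if k = j then -\<sigma> else 0)) else 0))"
  proof -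
    have Yi: "(blk n x 1 * emat (Suc n) n j (-\<sigma>)) $$ (i,k) = blk n x 1 $$ (i,k) + (if k = j then -\<sigma> * (if i = n then 1 else 0) else 0)"
      using YR[OF i k] bn[OF i] by simp
    have Yn: "(blk n x 1 * emat (Suc n) n j (-\<sigma>)) $$ (n,k) = (if k = n then 1 else 0) + (if k = j then -\<sigma> else 0)"
      using YR[of n k] k j nb[OF k] bn[of n] by simp
    show ?thesis unfolding D LZ[OF i k] Yi Yn ..
  qed
  have ss: "\<sigma> * \<sigma> = 1" using s by auto
  have sj: "snd x j * snd x j = 1" using SP_D(6)[OF x] .
  show "?M $$ (i,k) = ?R $$ (i,k)"
    unfolding R lhs
  proof -
    consider "i = n" | "i = fst x j" | "i \<noteq> n" "i \<noteq> fst x j" by blast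
    thus "(if i = fst x (transpose j n k) then ((snd x)(j := \<sigma>, n := \<sigma> * snd x j)) k else 0) - (if i = k then 1 else 0) =
     (if i = n then -1 else 1) *
     ((blk n x 1 $$ (i,k) + (if k = j then -\<sigma> * (if i = n then 1 else 0) else 0)) +
      (if i = fst x j then \<sigma> * snd x j * ((if k = n then 1 else 0) + (if k = j then -\<sigma> else 0)) else 0))"
    proof cases
      case 1
      thus ?thesis using k j pj pnn pn[of k]
        by (cases "k = n"; cases "k = j") (auto simp: blk_index transpose_def)
    next
      case 2
      thus ?thesis using k j pj pnn pn[of k] pinj[of k j] ss sj
        by (cases "k = n"; cases "k = j") (auto simp: blk_index transpose_def algebra_simps)
    next
      case 3
      thus ?thesis using i k j pj pnn pn[of k]
        by (cases "k = n"; cases "k = j") (auto simp: blk_index transpose_def)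
    qed
  qed
qed auto

lemma dd_ins:
  assumes x: "x \<in> SP n" and j: "j < n" and s: "\<sigma> = 1 \<or> \<sigma> = -1"
  shows "dd (Suc n) (ins n x j \<sigma>) = dd n x"
proof -
  let ?m = "Suc n"
  let ?Y = "blk n x 1"
  let ?ER = "emat ?m n j (-\<sigma>)"
  let ?EL = "emat ?m (fst x j) n (\<sigma> * snd x j)"
  let ?D = "dmat ?m n"
  have pj: "fst x j < n" using SP_D(5)[OF x j] .
  have Z: "?Y * ?ER \<in> carrier_mat ?m ?m" by auto
  have W: "?EL * (?Y * ?ER) \<in> carrier_mat ?m ?m" by auto
  have k1: "mat_kernel (?D * (?EL * (?Y * ?ER))) = mat_kernel (?EL * (?Y * ?ER))"
    by (rule mat_kernel_mult_eq[OF W dmat_carrier dmat_carrier dmat_inv])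
  have inv2: "emat ?m (fst x j) n (-(\<sigma> * snd x j)) * ?EL = 1\<^sub>m ?m"
    using emat_inv[of "fst x j" ?m n "-(\<sigma> * snd x j)"] pj by simp
  have k2: "mat_kernel (?EL * (?Y * ?ER)) = mat_kernel (?Y * ?ER)"
    by (rule mat_kernel_mult_eq[OF Z emat_carrier emat_carrier inv2])
  have inv3: "?ER * emat ?m n j (- (-\<sigma>)) = 1\<^sub>m ?m" using emat_inv[of n ?m j "-\<sigma>"] j by simp
  have k3: "kernel.dim ?m (?Y * ?ER) = kernel.dim ?m ?Y"
    by (rule mat_kernel_dim_mult_eq_right[OF blk_carrier emat_carrier emat_carrier inv3])
  have "dd ?m (ins n x j \<sigma>) = kernel.dim ?m (?D * (?EL * (?Y * ?ER)))"
    unfolding dd_def kernel_dim_def ins_matrix[OF x j s] by simp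
  also have "\<dots> = kernel.dim ?m (?Y * ?ER)" using k1 k2 by simp
  also have "\<dots> = kernel.dim ?m ?Y" by (rule k3)
  also have "\<dots> = kernel_dim ?Y" unfolding kernel_dim_def by simp
  also have "\<dots> = dd n x" using kernel_dim_blk[of n x 1] by simp
  finally show ?thesis .
qed


definition ff :: "nat \<Rightarrow> sp \<Rightarrow> nat" where
  "ff n x = card {i. i < n \<and> fst x i = i \<and> snd x i = 1}"

definition sg :: "real \<Rightarrow> rat" where "sg v = (if v = 1 then 1 else -1)"

definition esgn :: "nat \<Rightarrow> sp \<Rightarrow> rat" where
  "esgn n x = (\<Prod>i<n. sg (snd x i))"

lemma sg_sq: "sg v * sg v = 1" unfolding sg_def by auto

lemma sg_mult: "(a = 1 \<or> a = -1) \<Longrightarrow> (b = 1 \<or> b = -1) \<Longrightarrow> sg (a * b) = sg a * sg b"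
  unfolding sg_def by auto

lemma ff_Suc_same: assumes x: "x \<in> SP n" shows "ff (Suc n) x = ff n x + 1"
proof -
  have "{i. i < Suc n \<and> fst x i = i \<and> snd x i = 1} = insert n {i. i < n \<and> fst x i = i \<and> snd x i = 1}"
    using SP_fst_n[OF x] SP_snd_n[OF x] by (auto simp: less_Suc_eq)
  thus ?thesis unfolding ff_def by simp
qed

lemma ff_fixm: assumes x: "x \<in> SP n" shows "ff (Suc n) (fixm n x) = ff n x"
proof -
  have "{i. i < Suc n \<and> fst (fixm n x) i = i \<and> snd (fixm n x) i = 1} = {i. i < n \<and> fst x i = i \<and> snd x i = 1}"
    unfolding fixm_def by (auto simp: less_Suc_eq)
  thus ?thesis unfolding ff_def by simp
qed

lemma ff_ins: assumes x: "x \<in> SP n" and j: "j < n"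
  shows "ff (Suc n) (ins n x j \<sigma>) + (if fst x j = j \<and> snd x j = 1 then 1 else 0) = ff n x"
proof -
  let ?S = "{i. i < n \<and> fst x i = i \<and> snd x i = 1}"
  have pj: "fst x j < n" using SP_D(5)[OF x j] .
  have pnn: "fst x n = n" using SP_fst_n[OF x] .
  have eq: "{i. i < Suc n \<and> fst (ins n x j \<sigma>) i = i \<and> snd (ins n x j \<sigma>) i = 1} = ?S - {j}"
    using j pj pnn unfolding ins_def by (auto simp: less_Suc_eq transpose_def)
  have fin: "finite ?S" by simp
  show ?thesis unfolding ff_def eq
    using card.remove[OF fin, of j] card_Diff_singleton_if[of ?S j] j by auto
qed

lemma sum_ind: "(\<Sum>j<n. (if fst x j = j \<and> snd x j = 1 then 1 else 0) :: rat) = of_nat (ff n x)"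
proof -
  have "(\<Sum>j<n. (if fst x j = j \<and> snd x j = 1 then 1 else 0) :: rat) = of_nat (card ({..<n} \<inter> {j. fst x j = j \<and> snd x j = 1}))"
    by (simp add: sum.If_cases)
  moreover have "{..<n} \<inter> {j. fst x j = j \<and> snd x j = 1} = {i. i < n \<and> fst x i = i \<and> snd x i = 1}" by auto
  ultimately show ?thesis unfolding ff_def by (simp only:)
qed

lemma esgn_Suc_same: assumes x: "x \<in> SP n" shows "esgn (Suc n) x = esgn n x"
  unfolding esgn_def using SP_snd_n[OF x] by (simp add: sg_def)

lemma esgn_fixm: assumes x: "x \<in> SP n" shows "esgn (Suc n) (fixm n x) = - esgn n x"
proof -
  have "(\<Prod>i<n. sg (snd (fixm n x) i)) = (\<Prod>i<n. sg (snd x i))"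
    unfolding fixm_def by (intro prod.cong) auto
  thus ?thesis unfolding esgn_def by (simp add: fixm_def sg_def)
qed

lemma esgn_ins: assumes x: "x \<in> SP n" and j: "j < n" and s: "\<sigma> = 1 \<or> \<sigma> = -1"
  shows "esgn (Suc n) (ins n x j \<sigma>) = esgn n x"
proof -
  let ?t = "snd (ins n x j \<sigma>)"
  have A: "(\<Prod>i<n. sg (?t i)) = sg \<sigma> * (\<Prod>i\<in>{..<n}-{j}. sg (snd x i))"
  proof -
    have "(\<Prod>i<n. sg (?t i)) = sg (?t j) * (\<Prod>i\<in>{..<n}-{j}. sg (?t i))"
      using j by (simp add: prod.remove)
    also have "(\<Prod>i\<in>{..<n}-{j}. sg (?t i)) = (\<Prod>i\<in>{..<n}-{j}. sg (snd x i))"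
      by (intro prod.cong) (auto simp: ins_def)
    finally show ?thesis using j by (simp add: ins_def)
  qed
  have B: "esgn n x = sg (snd x j) * (\<Prod>i\<in>{..<n}-{j}. sg (snd x i))"
    unfolding esgn_def using j by (simp add: prod.remove)
  have C: "sg (?t n) = sg \<sigma> * sg (snd x j)"
    unfolding ins_def using j s SP_D(2)[OF x, of j] by (simp add: sg_mult)
  have "esgn (Suc n) (ins n x j \<sigma>) = (\<Prod>i<n. sg (?t i)) * sg (?t n)"
    unfolding esgn_def by simp
  also have "\<dots> = (sg \<sigma> * sg \<sigma>) * (sg (snd x j) * (\<Prod>i\<in>{..<n}-{j}. sg (snd x i)))"
    unfolding A C by (simp add: algebra_simps)
  also have "\<dots> = esgn n x" using B sg_sq by simp
  finally show ?thesis .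
qed


definition AA :: "nat \<Rightarrow> rat poly" where "AA n = (\<Sum>x\<in>SP n. monom 1 (dd n x))"
definition AE :: "nat \<Rightarrow> rat poly" where "AE n = (\<Sum>x\<in>SP n. monom (esgn n x) (dd n x))"
definition FF :: "nat \<Rightarrow> rat poly" where "FF n = (\<Sum>x\<in>SP n. monom (of_nat (ff n x)) (dd n x))"
definition FE :: "nat \<Rightarrow> rat poly" where "FE n = (\<Sum>x\<in>SP n. monom (esgn n x * of_nat (ff n x)) (dd n x))"

lemma smult_sum_right:
  fixes f :: "'b \<Rightarrow> 'a::comm_semiring_0 poly"
  shows "Polynomial.smult c (sum f A) = (\<Sum>x\<in>A. Polynomial.smult c (f x))"
  by (induction A rule: infinite_finite_induct) (auto simp: smult_add_right)

lemma X_sum: fixes c :: "'b \<Rightarrow> rat" shows "monom 1 1 * (\<Sum>x\<in>A. monom (c x) (d x)) = (\<Sum>x\<in>A. monom (c x) (Suc (d x)))"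
  unfolding sum_distrib_left mult_monom by simp

lemma smult_sum_monom: fixes c :: "'b \<Rightarrow> rat" shows "Polynomial.smult k (\<Sum>x\<in>A. monom (c x) (d x)) = (\<Sum>x\<in>A. monom (k * c x) (d x))"
  by (simp add: smult_sum_right smult_monom)

lemma sum_j_monom: fixes a :: "nat \<Rightarrow> rat" shows "(\<Sum>j<n. monom (a j) d + monom (b j) d) = monom (\<Sum>j<n. a j + b j) d"
  by (simp only: add_monom monom_sum[symmetric] sum.distrib)

lemma ins_pm: "j \<in> {..<n} \<Longrightarrow> j < n" by simp

lemma AA_Suc: "AA (Suc n) = monom 1 1 * AA n + Polynomial.smult (of_nat (2*n+1)) (AA n)"
proof -
  have "AA (Suc n) = (\<Sum>x\<in>SP n. monom (1::rat) (Suc (dd n x)) + monom (of_nat (2*n+1)) (dd n x))"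
    unfolding AA_def sum_SP_Suc
  proof (rule sum.cong[OF refl])
    fix x assume x: "x \<in> SP n"
    have S: "(\<Sum>j<n. monom 1 (dd (Suc n) (ins n x j 1)) + monom 1 (dd (Suc n) (ins n x j (-1))))
        = monom (of_nat (2*n) :: rat) (dd n x)"
    proof -
      have "(\<Sum>j<n. monom 1 (dd (Suc n) (ins n x j 1)) + monom 1 (dd (Suc n) (ins n x j (-1))))
        = (\<Sum>j<n. monom (1::rat) (dd n x) + monom 1 (dd n x))"
        by (intro sum.cong refl) (simp add: dd_ins[OF x])
      also have "\<dots> = monom (of_nat (2*n)) (dd n x)" unfolding sum_j_monom by simp
      finally show ?thesis .
    qed
    show "monom 1 (dd (Suc n) x) + monom 1 (dd (Suc n) (fixm n x)) +
        (\<Sum>j<n. monom 1 (dd (Suc n) (ins n x j 1)) + monom 1 (dd (Suc n) (ins n x j (-1)))) =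
        monom (1::rat) (Suc (dd n x)) + monom (of_nat (2*n+1)) (dd n x)"
      unfolding S dd_Suc_same[OF x] dd_fixm[OF x] by (simp add: add_monom algebra_simps)
  qed
  also have "\<dots> = monom 1 1 * AA n + Polynomial.smult (of_nat (2*n+1)) (AA n)"
    unfolding AA_def X_sum smult_sum_monom by (simp add: sum.distrib)
  finally show ?thesis .
qed

lemma ff_ins_rat: assumes x: "x \<in> SP n" and j: "j < n"
  shows "(of_nat (ff (Suc n) (ins n x j \<sigma>)) :: rat) = of_nat (ff n x) - (if fst x j = j \<and> snd x j = 1 then 1 else 0)"
proof -
  have "of_nat (ff (Suc n) (ins n x j \<sigma>) + (if fst x j = j \<and> snd x j = 1 then 1 else 0)) = (of_nat (ff n x) :: rat)"
    using ff_ins[OF x j, of \<sigma>] by simp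
  thus ?thesis by (simp split: if_splits)
qed

lemma AE_Suc: "AE (Suc n) = monom 1 1 * AE n + Polynomial.smult (of_nat (2*n) - 1) (AE n)"
proof -
  have "AE (Suc n) = (\<Sum>x\<in>SP n. monom (esgn n x) (Suc (dd n x)) + monom ((of_nat (2*n) - 1) * esgn n x) (dd n x))"
    unfolding AE_def sum_SP_Suc
  proof (rule sum.cong[OF refl])
    fix x assume x: "x \<in> SP n"
    have S: "(\<Sum>j<n. monom (esgn (Suc n) (ins n x j 1)) (dd (Suc n) (ins n x j 1)) + monom (esgn (Suc n) (ins n x j (-1))) (dd (Suc n) (ins n x j (-1))))
        = monom (of_nat (2*n) * esgn n x) (dd n x)"
    proof -
      have "(\<Sum>j<n. monom (esgn (Suc n) (ins n x j 1)) (dd (Suc n) (ins n x j 1)) + monom (esgn (Suc n) (ins n x j (-1))) (dd (Suc n) (ins n x j (-1))))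
        = (\<Sum>j<n. monom (esgn n x) (dd n x) + monom (esgn n x) (dd n x))"
        by (intro sum.cong refl) (simp add: dd_ins[OF x] esgn_ins[OF x])
      also have "\<dots> = monom (of_nat (2*n) * esgn n x) (dd n x)" unfolding sum_j_monom by (simp add: algebra_simps)
      finally show ?thesis .
    qed
    show "monom (esgn (Suc n) x) (dd (Suc n) x) + monom (esgn (Suc n) (fixm n x)) (dd (Suc n) (fixm n x)) +
        (\<Sum>j<n. monom (esgn (Suc n) (ins n x j 1)) (dd (Suc n) (ins n x j 1)) + monom (esgn (Suc n) (ins n x j (-1))) (dd (Suc n) (ins n x j (-1)))) =
        monom (esgn n x) (Suc (dd n x)) + monom ((of_nat (2*n) - 1) * esgn n x) (dd n x)"
      unfolding S dd_Suc_same[OF x] dd_fixm[OF x] esgn_Suc_same[OF x] esgn_fixm[OF x]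
      by (simp add: add_monom algebra_simps)
  qed
  also have "\<dots> = monom 1 1 * AE n + Polynomial.smult (of_nat (2*n) - 1) (AE n)"
    unfolding AE_def X_sum smult_sum_monom by (simp add: sum.distrib)
  finally show ?thesis .
qed

lemma FF_Suc: "FF (Suc n) = monom 1 1 * FF n + Polynomial.smult (of_nat (2*n) - 1) (FF n) + monom 1 1 * AA n"
proof -
  have "FF (Suc n) = (\<Sum>x\<in>SP n. monom (of_nat (ff n x)) (Suc (dd n x)) + monom ((of_nat (2*n) - 1) * of_nat (ff n x)) (dd n x)
      + monom 1 (Suc (dd n x)))"
    unfolding FF_def sum_SP_Suc
  proof (rule sum.cong[OF refl])
    fix x assume x: "x \<in> SP n"
    let ?f = "of_nat (ff n x) :: rat"
    let ?ind = "\<lambda>j. (if fst x j = j \<and> snd x j = 1 then 1 else 0) :: rat"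
    have S: "(\<Sum>j<n. monom (of_nat (ff (Suc n) (ins n x j 1))) (dd (Suc n) (ins n x j 1)) + monom (of_nat (ff (Suc n) (ins n x j (-1)))) (dd (Suc n) (ins n x j (-1))))
        = monom (2 * of_nat n * ?f - 2 * ?f) (dd n x)"
    proof -
      have "(\<Sum>j<n. monom (of_nat (ff (Suc n) (ins n x j 1))) (dd (Suc n) (ins n x j 1)) + monom (of_nat (ff (Suc n) (ins n x j (-1)))) (dd (Suc n) (ins n x j (-1))))
        = (\<Sum>j<n. monom (?f - ?ind j) (dd n x) + monom (?f - ?ind j) (dd n x))"
        by (intro sum.cong refl) (simp add: dd_ins[OF x] ff_ins_rat[OF x])
      also have "\<dots> = monom (\<Sum>j<n. (?f - ?ind j) + (?f - ?ind j)) (dd n x)" by (rule sum_j_monom)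
      also have "(\<Sum>j<n. (?f - ?ind j) + (?f - ?ind j)) = 2 * of_nat n * ?f - 2 * ?f"
        by (simp add: sum.distrib sum_subtractf sum_ind sum_distrib_left[symmetric])
      finally show ?thesis .
    qed
    show "monom (of_nat (ff (Suc n) x)) (dd (Suc n) x) + monom (of_nat (ff (Suc n) (fixm n x))) (dd (Suc n) (fixm n x)) +
        (\<Sum>j<n. monom (of_nat (ff (Suc n) (ins n x j 1))) (dd (Suc n) (ins n x j 1)) + monom (of_nat (ff (Suc n) (ins n x j (-1)))) (dd (Suc n) (ins n x j (-1)))) =
        monom ?f (Suc (dd n x)) + monom ((of_nat (2*n) - 1) * ?f) (dd n x) + monom 1 (Suc (dd n x))"
      unfolding S dd_Suc_same[OF x] dd_fixm[OF x] ff_Suc_same[OF x] ff_fixm[OF x]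
      by (rule poly_eqI) (simp add: algebra_simps)
  qed
  also have "\<dots> = monom 1 1 * FF n + Polynomial.smult (of_nat (2*n) - 1) (FF n) + monom 1 1 * AA n"
    unfolding FF_def AA_def X_sum smult_sum_monom by (simp add: sum.distrib)
  finally show ?thesis .
qed

lemma FE_Suc: "FE (Suc n) = monom 1 1 * FE n + Polynomial.smult (of_nat (2*n) - 3) (FE n) + monom 1 1 * AE n"
proof -
  have "FE (Suc n) = (\<Sum>x\<in>SP n. monom (esgn n x * of_nat (ff n x)) (Suc (dd n x)) + monom ((of_nat (2*n) - 3) * (esgn n x * of_nat (ff n x))) (dd n x)
      + monom (esgn n x) (Suc (dd n x)))"
    unfolding FE_def sum_SP_Suc
  proof (rule sum.cong[OF refl])
    fix x assume x: "x \<in> SP n"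
    let ?f = "of_nat (ff n x) :: rat"
    let ?e = "esgn n x"
    let ?ind = "\<lambda>j. (if fst x j = j \<and> snd x j = 1 then 1 else 0) :: rat"
    have S: "(\<Sum>j<n. monom (esgn (Suc n) (ins n x j 1) * of_nat (ff (Suc n) (ins n x j 1))) (dd (Suc n) (ins n x j 1)) + monom (esgn (Suc n) (ins n x j (-1)) * of_nat (ff (Suc n) (ins n x j (-1)))) (dd (Suc n) (ins n x j (-1))))
        = monom (?e * (2 * of_nat n * ?f - 2 * ?f)) (dd n x)"
    proof -
      have "(\<Sum>j<n. monom (esgn (Suc n) (ins n x j 1) * of_nat (ff (Suc n) (ins n x j 1))) (dd (Suc n) (ins n x j 1)) + monom (esgn (Suc n) (ins n x j (-1)) * of_nat (ff (Suc n) (ins n x j (-1)))) (dd (Suc n) (ins n x j (-1))))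
        = (\<Sum>j<n. monom (?e * (?f - ?ind j)) (dd n x) + monom (?e * (?f - ?ind j)) (dd n x))"
        by (intro sum.cong refl) (simp add: dd_ins[OF x] ff_ins_rat[OF x] esgn_ins[OF x])
      also have "\<dots> = monom (\<Sum>j<n. (?e * (?f - ?ind j)) + (?e * (?f - ?ind j))) (dd n x)" by (rule sum_j_monom)
      also have "(\<Sum>j<n. (?e * (?f - ?ind j)) + (?e * (?f - ?ind j))) = ?e * (2 * of_nat n * ?f - 2 * ?f)"
        by (simp add: sum.distrib sum_subtractf sum_ind sum_distrib_left[symmetric] algebra_simps)
      finally show ?thesis .
    qed
    show "monom (esgn (Suc n) x * of_nat (ff (Suc n) x)) (dd (Suc n) x) + monom (esgn (Suc n) (fixm n x) * of_nat (ff (Suc n) (fixm n x))) (dd (Suc n) (fixm n x)) +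
        (\<Sum>j<n. monom (esgn (Suc n) (ins n x j 1) * of_nat (ff (Suc n) (ins n x j 1))) (dd (Suc n) (ins n x j 1)) + monom (esgn (Suc n) (ins n x j (-1)) * of_nat (ff (Suc n) (ins n x j (-1)))) (dd (Suc n) (ins n x j (-1)))) =
        monom (?e * ?f) (Suc (dd n x)) + monom ((of_nat (2*n) - 3) * (?e * ?f)) (dd n x) + monom ?e (Suc (dd n x))"
      unfolding S dd_Suc_same[OF x] dd_fixm[OF x] ff_Suc_same[OF x] ff_fixm[OF x] esgn_Suc_same[OF x] esgn_fixm[OF x]
      by (rule poly_eqI) (simp add: algebra_simps)
  qed
  also have "\<dots> = monom 1 1 * FE n + Polynomial.smult (of_nat (2*n) - 3) (FE n) + monom 1 1 * AE n"
    unfolding FE_def AE_def X_sum smult_sum_monom by (simp add: sum.distrib)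
  finally show ?thesis .
qed


abbreviation "XX \<equiv> (monom 1 1 :: rat poly)"

lemma SP_0: "SP 0 = {pid}"
proof -
  have "x = pid" if "x \<in> SP 0" for x
  proof -
    have "fst x = id" using SP_D(4)[OF that] by auto
    moreover have "snd x = (\<lambda>_. 1)" using SP_D(3)[OF that] by auto
    ultimately show ?thesis unfolding pid_def by (simp add: prod_eq_iff)
  qed
  thus ?thesis using pid_SP by blast
qed

lemma dd_0: "dd 0 x = 0"
proof -
  have "spm 0 x - 1\<^sub>m 0 = 1\<^sub>m 0" by (rule eq_matI) auto
  thus ?thesis unfolding dd_def kernel_dim_def using kernel_one_mat(1)[of 0] by simp
qed

lemma AA_0: "AA 0 = 1" unfolding AA_def SP_0 by (simp add: dd_0)
lemma AE_0: "AE 0 = 1" unfolding AE_def SP_0 by (simp add: dd_0 esgn_def)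
lemma FF_0: "FF 0 = 0" unfolding FF_def SP_0 by (simp add: dd_0 ff_def)
lemma FE_0: "FE 0 = 0" unfolding FE_def SP_0 by (simp add: dd_0 ff_def)

lemma const_diff: "[:a - b:] = [:a:] - [:b::rat:]"
  by (rule poly_eqI) (simp add: coeff_pCons split: nat.split)
lemma const_neg: "[:- b:] = - [:b::rat:]"
  by (rule poly_eqI) (simp add: coeff_pCons split: nat.split)
lemma const_num: "[:numeral k :: rat:] = numeral k"
  by (simp add: numeral_poly)
lemma const_nat: "[:of_nat k :: rat:] = of_nat k"
  by (simp add: of_nat_poly)

lemma smult_C: "Polynomial.smult c p = [:c:] * p" by simp

lemma nat2: "(of_nat (2*n) :: rat poly) = 2 * of_nat n" by (simp only: of_nat_mult of_nat_numeral)

lemma AA_Suc': "AA (Suc n) = XX * AA n + (2 * of_nat n + 1) * AA n"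
  unfolding AA_Suc[of n] smult_C const_nat
  by (simp only: of_nat_add of_nat_mult of_nat_numeral of_nat_1)
lemma AE_Suc': "AE (Suc n) = XX * AE n + (2 * of_nat n - 1) * AE n"
  unfolding AE_Suc[of n] smult_C const_diff const_nat one_pCons[symmetric] nat2 ..
lemma FF_Suc': "FF (Suc n) = XX * FF n + (2 * of_nat n - 1) * FF n + XX * AA n"
  unfolding FF_Suc[of n] smult_C const_diff const_nat one_pCons[symmetric] nat2 ..
lemma FE_Suc': "FE (Suc n) = XX * FE n + (2 * of_nat n - 3) * FE n + XX * AE n"
  unfolding FE_Suc[of n] smult_C const_diff const_nat const_num nat2 ..

lemma AE_Suc_AA: "AE (Suc k) = (XX - 1) * AA k"
proof (induction k)
  case 0
  show ?case using AE_Suc'[of 0] by (simp add: AE_0 AA_0)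
next
  case (Suc k)
  show ?case unfolding AE_Suc'[of "Suc k"] Suc.IH AA_Suc'[of k] by (simp add: algebra_simps)
qed

lemma FF_Suc_closed: "FF (Suc n) = of_nat (Suc n) * XX * AA n"
proof (induction n)
  case 0
  show ?case using FF_Suc'[of 0] by (simp add: FF_0 AA_0)
next
  case (Suc n)
  show ?case unfolding FF_Suc'[of "Suc n"] Suc.IH AA_Suc'[of n] by (simp add: algebra_simps)
qed

lemma FE_Suc_closed: "FE (Suc n) = of_nat (Suc n) * XX * AE n"
proof (induction n)
  case 0
  show ?case using FE_Suc'[of 0] by (simp add: FE_0 AE_0)
next
  case (Suc n)
  show ?case unfolding FE_Suc'[of "Suc n"] Suc.IH AE_Suc'[of n] by (simp add: algebra_simps)
qed

lemma lin_poly: "[:c, 1:] = [:c:] + XX"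
  by (rule poly_eqI) (simp add: coeff_pCons coeff_monom split: nat.split)

lemma lin_poly2: "[:c, d:] = [:c:] + [:d:] * XX"
  by (rule poly_eqI) (simp add: coeff_pCons coeff_monom split: nat.split)

lemma AA_prod: "AA m = (\<Prod>a = 1..m. [:of_nat (2*a-1), 1:])"
proof (induction m)
  case 0
  show ?case by (simp add: AA_0)
next
  case (Suc m)
  have "(\<Prod>a = 1..Suc m. [:of_nat (2*a-1) :: rat, 1:]) = [:of_nat (2*Suc m-1), 1:] * (\<Prod>a = 1..m. [:of_nat (2*a-1), 1:])"
    by (simp add: prod.nat_ivl_Suc')
  also have "[:of_nat (2*Suc m-1) :: rat, 1:] = XX + (2 * of_nat m + 1)"
    unfolding lin_poly const_nat by (simp add: algebra_simps)
  finally show ?case unfolding AA_Suc' Suc.IH[symmetric] by (simp add: algebra_simps)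
qed

lemma T_closed:
  "FF (Suc (Suc m)) + FE (Suc (Suc m)) - Polynomial.smult (1/2) (AA (Suc (Suc m)) + AE (Suc (Suc m)))
   = [:-1,1:] * [:of_nat ((Suc m) * (2 * Suc (Suc m) - 3)), of_nat (2 * Suc (Suc m) - 1):] * AA m"
proof -
  let ?A = "AA m"
  have h: "[:1/2 :: rat:] * 2 = 1" by (simp add: numeral_poly)
  have s1: "AA (Suc (Suc m)) + AE (Suc (Suc m)) = 2 * ((XX + 2 * of_nat m + 1) * (XX + of_nat m + 1) * ?A)"
    unfolding AE_Suc_AA AA_Suc' by (simp add: algebra_simps)
  have s2: "Polynomial.smult (1/2) (AA (Suc (Suc m)) + AE (Suc (Suc m))) = (XX + 2 * of_nat m + 1) * (XX + of_nat m + 1) * ?A"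
    unfolding s1 smult_C mult.assoc[symmetric] h by simp
  have s3: "FF (Suc (Suc m)) + FE (Suc (Suc m)) = (of_nat m + 2) * XX * ((XX + 2 * of_nat m + 1) + (XX - 1)) * ?A"
    unfolding FF_Suc_closed FE_Suc_closed AE_Suc_AA AA_Suc' by (simp add: algebra_simps)
  have c1: "[:of_nat ((Suc m) * (2 * Suc (Suc m) - 3)) :: rat, of_nat (2 * Suc (Suc m) - 1):]
      = (of_nat m + 1) * (2 * of_nat m + 1) + (2 * of_nat m + 3) * XX"
  proof -
    have a: "(Suc m) * (2 * Suc (Suc m) - 3) = (m+1) * (2*m+1)" by simp
    have b: "2 * Suc (Suc m) - 1 = 2*m+3" by simp
    have "[:of_nat ((m+1) * (2*m+1)) :: rat, of_nat (2*m+3):] = [:of_nat ((m+1) * (2*m+1)):] + [:of_nat (2*m+3):] * XX"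
      by (rule lin_poly2)
    also have "\<dots> = of_nat ((m+1) * (2*m+1)) + of_nat (2*m+3) * XX" by (simp only: const_nat)
    also have "\<dots> = (of_nat m + 1) * (2 * of_nat m + 1) + (2 * of_nat m + 3) * XX"
      by (simp only: of_nat_mult of_nat_add of_nat_numeral of_nat_1)
    finally show ?thesis unfolding a b .
  qed
  have c2: "[:-1, 1:] = XX - (1 :: rat poly)"
    unfolding lin_poly const_neg by (simp add: one_pCons)
  show ?thesis unfolding s2 s3 c1 c2 by (simp add: algebra_simps)
qed


definition EP :: "nat \<Rightarrow> sp set" where "EP n = {x\<in>SP n. esgn n x = 1}"

lemma esgn_pm: "esgn n x = 1 \<or> esgn n x = -1"
  unfolding esgn_def
proof (induction n)
  case 0 thus ?case by simp
next
  case (Suc n) thus ?case by (auto simp: sg_def)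
qed

lemma finite_EP: "finite (EP n)" unfolding EP_def using finite_SP by simp

lemma sum_EP: "(\<Sum>x\<in>EP n. g x) = (\<Sum>x\<in>SP n. if esgn n x = 1 then g x else 0)"
  unfolding EP_def using finite_SP by (simp add: sum.inter_filter)

lemma EP_poly: "(\<Sum>x\<in>EP n. monom (2 * of_nat (ff n x) - 1) (dd n x)) =
   FF n + FE n - Polynomial.smult (1/2) (AA n + AE n)"
proof -
  have "(\<Sum>x\<in>EP n. monom (2 * of_nat (ff n x) - 1) (dd n x)) =
     (\<Sum>x\<in>SP n. monom (of_nat (ff n x)) (dd n x) + monom (esgn n x * of_nat (ff n x)) (dd n x)
        - (monom (1/2 * 1) (dd n x) + monom (1/2 * esgn n x) (dd n x)))"
    unfolding sum_EP
  proof (rule sum.cong[OF refl])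
    fix x
    show "(if esgn n x = 1 then monom (2 * of_nat (ff n x) - 1) (dd n x) else 0) =
      monom (of_nat (ff n x)) (dd n x) + monom (esgn n x * of_nat (ff n x)) (dd n x)
        - (monom (1/2 * 1) (dd n x) + monom (1/2 * esgn n x) (dd n x))"
      apply (rule poly_eqI) using esgn_pm[of n x] by (auto simp: algebra_simps)
  qed
  also have "\<dots> = FF n + FE n - Polynomial.smult (1/2) (AA n + AE n)"
    unfolding FF_def FE_def AA_def AE_def smult_add_right smult_sum_monom
    by (simp add: sum.distrib sum_subtractf)
  finally show ?thesis .
qed

lemma card_SP: "card (SP n) = 2^n * fact n"
proof (induction n)
  case 0 show ?case by (simp add: SP_0)
next
  case (Suc n)
  have "card (SP (Suc n)) = (\<Sum>x\<in>SP (Suc n). 1)" by simp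
  also have "\<dots> = (\<Sum>x\<in>SP n. 1 + 1 + (\<Sum>j<n. 1 + 1))" by (rule sum_SP_Suc)
  also have "\<dots> = card (SP n) * (2 * Suc n)" by simp
  finally show ?case unfolding Suc.IH by (simp add: algebra_simps)
qed

lemma ES_Suc: "(\<Sum>x\<in>SP (Suc n). esgn (Suc n) x) = of_nat (2*n) * (\<Sum>x\<in>SP n. esgn n x)"
proof -
  have "(\<Sum>x\<in>SP (Suc n). esgn (Suc n) x) = (\<Sum>x\<in>SP n. esgn (Suc n) x + esgn (Suc n) (fixm n x) + (\<Sum>j<n. esgn (Suc n) (ins n x j 1) + esgn (Suc n) (ins n x j (-1))))"
    by (rule sum_SP_Suc)
  also have "\<dots> = (\<Sum>x\<in>SP n. of_nat (2*n) * esgn n x)"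
  proof (rule sum.cong[OF refl])
    fix x assume x: "x \<in> SP n"
    have "(\<Sum>j<n. esgn (Suc n) (ins n x j 1) + esgn (Suc n) (ins n x j (-1))) = (\<Sum>j<n. esgn n x + esgn n x)"
      by (intro sum.cong refl) (simp add: esgn_ins[OF x])
    thus "esgn (Suc n) x + esgn (Suc n) (fixm n x) + (\<Sum>j<n. esgn (Suc n) (ins n x j 1) + esgn (Suc n) (ins n x j (-1))) = of_nat (2*n) * esgn n x"
      using esgn_Suc_same[OF x] esgn_fixm[OF x] by simp
  qed
  also have "\<dots> = of_nat (2*n) * (\<Sum>x\<in>SP n. esgn n x)" by (simp add: sum_distrib_left)
  finally show ?thesis .
qed

lemma ES_pos: "n \<ge> 1 \<Longrightarrow> (\<Sum>x\<in>SP n. esgn n x) = 0"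
proof (induction n)
  case 0 thus ?case by simp
next
  case (Suc n)
  show ?case
  proof (cases "n = 0")
    case True thus ?thesis using ES_Suc[of 0] by simp
  next
    case False thus ?thesis using ES_Suc[of n] Suc by simp
  qed
qed

lemma card_EP: assumes "n \<ge> 1" shows "card (EP n) = 2^(n-1) * fact n"
proof -
  have "(of_nat (card (EP n)) :: rat) = (\<Sum>x\<in>EP n. 1)" by simp
  also have "\<dots> = (\<Sum>x\<in>SP n. 1/2 + 1/2 * esgn n x)"
    unfolding sum_EP
  proof (intro sum.cong refl)
    fix x show "(if esgn n x = 1 then 1 else 0) = 1/2 + 1/2 * esgn n x" using esgn_pm[of n x] by auto
  qed
  also have "\<dots> = 1/2 * of_nat (card (SP n))"
    using ES_pos[OF assms] by (simp add: sum.distrib sum_divide_distrib[symmetric])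
  also have "\<dots> = of_nat (2^(n-1) * fact n)"
    unfolding card_SP using assms by (cases n) (auto simp: of_nat_mult)
  finally show ?thesis by (simp only: of_nat_eq_iff)
qed


definition gen :: "nat \<Rightarrow> nat \<Rightarrow> sp" where
  "gen r k = (if k < r then (transpose (k-1) k, \<lambda>_. 1)
     else (transpose (r-2) (r-1), \<lambda>i. if i = r-2 \<or> i = r-1 then -1 else 1))"

lemma root_sq_lt:
  assumes "1 \<le> k" "k < r"
  shows "simple_root_D r k \<bullet> simple_root_D r k = 2"
proof -
  have "simple_root_D r k \<bullet> simple_root_D r k =
     (\<Sum>i\<in>{0..<r}. (if i = k-1 then 1 else 0) + (if i = k then 1 else 0))"
    unfolding scalar_prod_def simple_root_D_def using assms by (intro sum.cong) auto
  also have "\<dots> = 2" using assms by (simp add: sum.distrib)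
  finally show ?thesis .
qed

lemma root_sq_r:
  assumes "r \<ge> 2"
  shows "simple_root_D r r \<bullet> simple_root_D r r = 2"
proof -
  have "simple_root_D r r \<bullet> simple_root_D r r =
     (\<Sum>i\<in>{0..<r}. (if i = r-2 then 1 else 0) + (if i = r-1 then 1 else 0))"
    unfolding scalar_prod_def simple_root_D_def using assms by (intro sum.cong) auto
  also have "\<dots> = 2" using assms by (simp add: sum.distrib)
  finally show ?thesis .
qed

lemma refl_gen:
  assumes r: "r \<ge> 2" and k: "1 \<le> k" "k \<le> r"
  shows "reflection_mat r (simple_root_D r k) = spm r (gen r k)"
proof (cases "k < r")
  case True
  have sq: "simple_root_D r k \<bullet> simple_root_D r k = 2" using root_sq_lt k True by simp
  show ?thesis
  proof (rule eq_matI)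
    fix i j assume "i < dim_row (spm r (gen r k))" "j < dim_col (spm r (gen r k))"
    hence i: "i < r" and j: "j < r" by auto
    show "reflection_mat r (simple_root_D r k) $$ (i,j) = spm r (gen r k) $$ (i,j)"
      unfolding reflection_mat_def sq using i j True k
      by (auto simp: simple_root_D_def gen_def transpose_def)
  qed (auto simp: reflection_mat_def)
next
  case False
  hence kr: "k = r" using k by simp
  have sq: "simple_root_D r k \<bullet> simple_root_D r k = 2" using root_sq_r r kr by simp
  show ?thesis
  proof (rule eq_matI)
    fix i j assume "i < dim_row (spm r (gen r k))" "j < dim_col (spm r (gen r k))"
    hence i: "i < r" and j: "j < r" by auto
    show "reflection_mat r (simple_root_D r k) $$ (i,j) = spm r (gen r k) $$ (i,j)"
      unfolding reflection_mat_def sq using i j kr r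
      by (auto simp: simple_root_D_def gen_def transpose_def)
  qed (auto simp: reflection_mat_def)
qed


lemma pmul_assoc: "pmul (pmul x y) z = pmul x (pmul y z)"
  unfolding pmul_def by (simp add: o_def mult.assoc)

lemma pmul_pid_left[simp]: "pmul pid x = x" unfolding pmul_def pid_def by simp
lemma pmul_pid_right[simp]: "pmul x pid = x" unfolding pmul_def pid_def by simp

definition pinv :: "sp \<Rightarrow> sp" where
  "pinv x = (inv_into UNIV (fst x), \<lambda>j. snd x (inv_into UNIV (fst x) j))"

lemma pinv_SP: assumes x: "x \<in> SP n" shows "pinv x \<in> SP n"
proof -
  have p: "fst x permutes {..<n}" using SP_D(1)[OF x] .
  have ip: "inv_into UNIV (fst x) permutes {..<n}" using permutes_inv[OF p] .
  show ?thesis unfolding SP_def pinv_def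
    using ip SP_D(2)[OF x] SP_D(3)[OF x] permutes_not_in[OF ip] by auto
qed

lemma pinv_left: assumes x: "x \<in> SP n" shows "pmul (pinv x) x = pid"
proof -
  have p: "fst x permutes {..<n}" using SP_D(1)[OF x] .
  show ?thesis unfolding pmul_def pinv_def pid_def
    using permutes_inv_o(2)[OF p] permutes_inverses(2)[OF p] SP_D(6)[OF x] by (auto simp: fun_eq_iff)
qed

lemma pinv_right: assumes x: "x \<in> SP n" shows "pmul x (pinv x) = pid"
proof -
  have p: "fst x permutes {..<n}" using SP_D(1)[OF x] .
  show ?thesis unfolding pmul_def pinv_def pid_def
    using permutes_inv_o(1)[OF p] SP_D(6)[OF x] by (auto simp: fun_eq_iff)
qed

lemma esgn_pmul: assumes x: "x \<in> SP n" and y: "y \<in> SP n"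
  shows "esgn n (pmul x y) = esgn n x * esgn n y"
proof -
  have "esgn n (pmul x y) = (\<Prod>i<n. sg (snd x (fst y i)) * sg (snd y i))"
    unfolding esgn_def pmul_def using SP_D(2)[OF x] SP_D(2)[OF y] by (simp add: sg_mult)
  also have "\<dots> = (\<Prod>i<n. sg (snd x (fst y i))) * (\<Prod>i<n. sg (snd y i))"
    by (rule prod.distrib)
  also have "(\<Prod>i<n. sg (snd x (fst y i))) = (\<Prod>i<n. sg (snd x i))"
    using prod.permute[OF SP_D(1)[OF y], of "\<lambda>i. sg (snd x i)"] by (simp add: o_def)
  finally show ?thesis unfolding esgn_def by simp
qed

lemma esgn_pinv: assumes x: "x \<in> SP n" shows "esgn n (pinv x) = esgn n x"
proof -
  have "esgn n (pinv x) * esgn n x = 1"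
    using esgn_pmul[OF pinv_SP[OF x] x] pinv_left[OF x] by (simp add: esgn_def pid_def sg_def)
  thus ?thesis using esgn_pm[of n x] esgn_pm[of n "pinv x"] by auto
qed

definition Tgt :: "nat \<Rightarrow> nat \<Rightarrow> sp set" where
  "Tgt r m = {x\<in>SP r. esgn r x = 1 \<and> (\<forall>i<m. fst x i = i \<and> snd x i = 1)}"

lemma Tgt_pmul: "x \<in> Tgt r m \<Longrightarrow> y \<in> Tgt r m \<Longrightarrow> pmul x y \<in> Tgt r m"
  unfolding Tgt_def using pmul_SP esgn_pmul by (auto simp: pmul_def)

lemma pid_Tgt: "pid \<in> Tgt r m" unfolding Tgt_def using pid_SP[of r] by (auto simp: pid_def esgn_def sg_def)

lemma Tgt_SP: "x \<in> Tgt r m \<Longrightarrow> x \<in> SP r" unfolding Tgt_def by auto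

lemma EP_Tgt: "EP r = Tgt r 0" unfolding EP_def Tgt_def by auto

lemma gen_Tgt:
  assumes r: "r \<ge> 3" and k: "m + 1 \<le> k" "k \<le> r" and m: "m \<le> 1"
  shows "gen r k \<in> Tgt r m"
proof (cases "k < r")
  case True
  have "transpose (k-1) k permutes {..<r}" using True by (intro permutes_swap_id) auto
  thus ?thesis unfolding Tgt_def gen_def SP_def using True k m
    by (auto simp: esgn_def sg_def transpose_def)
next
  case False
  hence kr: "k = r" using k by simp
  have "transpose (r-2) (r-1) permutes {..<r}" using r by (intro permutes_swap_id) auto
  moreover have "esgn r (gen r r) = 1"
  proof -
    have "(\<Prod>i<r. sg (if i = r-2 \<or> i = r-1 then -1 else 1)) =
      (\<Prod>i<r. (if i = r-2 then -1 else 1) * (if i = r-1 then -1 else 1) :: rat)"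
      using r by (intro prod.cong) (auto simp: sg_def)
    also have "\<dots> = 1" using r by (simp add: prod.distrib)
    finally show ?thesis unfolding esgn_def gen_def by simp
  qed
  ultimately show ?thesis unfolding Tgt_def gen_def SP_def using kr m r
    by (auto simp: transpose_def)
qed


lemma RG_carrier: "w \<in> refl_group r S \<Longrightarrow> w \<in> carrier_mat r r"
  by (induction rule: refl_group.induct) (auto simp: reflection_mat_def)

lemma RG_mult: assumes a: "a \<in> refl_group r S" and b: "b \<in> refl_group r S" shows "a * b \<in> refl_group r S"
  using a
proof (induction rule: refl_group.induct)
  case one
  thus ?case using b RG_carrier[OF b] by simp
next
  case (step w k)
  have R: "reflection_mat r (simple_root_D r k) \<in> carrier_mat r r" by (simp add: reflection_mat_def)
  have "reflection_mat r (simple_root_D r k) * w * b = reflection_mat r (simple_root_D r k) * (w * b)"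
    using R RG_carrier[OF step.hyps(1)] RG_carrier[OF b] by (rule assoc_mult_mat)
  thus ?case using refl_group.step[OF step.IH step.hyps(2)] by simp
qed

lemma RG_sub:
  assumes r: "r \<ge> 4" and m: "m \<le> 1"
  shows "refl_group r {m+1..r} \<subseteq> spm r ` Tgt r m"
proof
  fix w assume "w \<in> refl_group r {m+1..r}"
  thus "w \<in> spm r ` Tgt r m"
  proof (induction rule: refl_group.induct)
    case one
    show ?case using spm_pid[of r] pid_Tgt[of r m] by (metis image_eqI)
  next
    case (step w k)
    then obtain y where y: "y \<in> Tgt r m" and w: "w = spm r y" by auto
    have k: "m + 1 \<le> k" "k \<le> r" using step.hyps(2) by auto
    have g: "gen r k \<in> Tgt r m" using gen_Tgt[of r m k] r k m by simp
    have R: "reflection_mat r (simple_root_D r k) = spm r (gen r k)" by (rule refl_gen) (use r k in auto)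
    have "reflection_mat r (simple_root_D r k) * w = spm r (pmul (gen r k) y)"
      unfolding w R using spm_mult[OF Tgt_SP[OF g] Tgt_SP[OF y]] by simp
    thus ?case using Tgt_pmul[OF g y] by blast
  qed
qed


locale gctx =
  fixes r m :: nat
  assumes r: "r \<ge> 4" and m: "m \<le> 1"
begin

definition inT :: "sp \<Rightarrow> bool" where
  "inT x \<longleftrightarrow> x \<in> SP r \<and> spm r x \<in> refl_group r {m+1..r}"

lemma inT_mul: "inT x \<Longrightarrow> inT y \<Longrightarrow> inT (pmul x y)"
  unfolding inT_def using pmul_SP spm_mult RG_mult by metis

lemma inT_pid: "inT pid"
  unfolding inT_def using spm_pid[of r] refl_group.one by auto

lemma inT_gen: assumes k: "m + 1 \<le> k" "k \<le> r" shows "inT (gen r k)"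
proof -
  have g: "gen r k \<in> Tgt r m" using gen_Tgt[of r m k] r k m by simp
  have R: "reflection_mat r (simple_root_D r k) = spm r (gen r k)" by (rule refl_gen) (use r k in auto)
  have "reflection_mat r (simple_root_D r k) * 1\<^sub>m r \<in> refl_group r {m+1..r}"
    by (rule refl_group.step[OF refl_group.one]) (use k in auto)
  hence "spm r (gen r k) \<in> refl_group r {m+1..r}" unfolding R by simp
  thus ?thesis unfolding inT_def using Tgt_SP[OF g] by simp
qed

lemma inT_adj: assumes a: "m \<le> a" "a + 1 < r" shows "inT (transpose a (a+1), \<lambda>_. 1)"
  using inT_gen[of "a+1"] a unfolding gen_def by simp

lemma pmul_perm: "pmul (p, \<lambda>_. 1) (q, \<lambda>_. 1) = (p \<circ> q, \<lambda>_. 1)"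
  unfolding pmul_def by simp

lemma inT_transp: assumes a: "m \<le> a" "a < b" "b < r" shows "inT (transpose a b, \<lambda>_. 1)"
  using a
proof (induction b)
  case 0 thus ?case by simp
next
  case (Suc b)
  show ?case
  proof (cases "a = b")
    case True thus ?thesis using inT_adj[of a] Suc by simp
  next
    case False
    hence ab: "a < b" using Suc by simp
    have e: "transpose a (Suc b) = transpose b (Suc b) \<circ> transpose a b \<circ> transpose b (Suc b)"
      using ab by (auto simp: fun_eq_iff transpose_def)
    have t1: "inT (transpose b (Suc b), \<lambda>_. 1)" using inT_adj[of b] ab Suc by simp
    have t2: "inT (transpose a b, \<lambda>_. 1)" using Suc ab by simp
    have "inT (pmul (pmul (transpose b (Suc b), \<lambda>_. 1) (transpose a b, \<lambda>_. 1)) (transpose b (Suc b), \<lambda>_. 1))"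
      by (intro inT_mul t1 t2)
    thus ?thesis unfolding pmul_perm e by assumption
  qed
qed

lemma inT_perm: assumes p: "p permutes {m..<r}" shows "inT (p, \<lambda>_. 1)"
  using p finite_atLeastLessThan
proof (induction rule: permutes_induct)
  case id thus ?case using inT_pid unfolding pid_def id_def by assumption
next
  case (swap a b p)
  have t: "inT (transpose a b, \<lambda>_. 1)"
  proof (cases "a < b")
    case True thus ?thesis using swap inT_transp[of a b] by auto
  next
    case False
    hence "b < a" using swap by simp
    thus ?thesis using swap inT_transp[of b a] by (auto simp: transpose_commute)
  qed
  show ?case using inT_mul[OF t swap.IH] unfolding pmul_perm .
qed

definition Nn :: "nat \<Rightarrow> real" where "Nn a = (if a = r-2 \<or> a = r-1 then -1 else 1)"

lemma inT_Nn: "inT (id, Nn)"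
proof -
  have "pmul (gen r r) (gen r (r-1)) = (id, Nn)"
    unfolding gen_def pmul_def Nn_def using r by (auto simp: fun_eq_iff transpose_def)
  thus ?thesis using inT_mul[OF inT_gen[of r] inT_gen[of "r-1"]] r m by auto
qed

lemma inT_Na: assumes a: "m \<le> a" "a < r - 1"
  shows "inT (id, \<lambda>i. if i = a \<or> i = r-1 then -1 else 1)"
proof (cases "a = r - 2")
  case True
  thus ?thesis using inT_Nn unfolding Nn_def by simp
next
  case False
  hence a2: "a < r - 2" using a by simp
  let ?t = "(transpose a (r-2), \<lambda>_::nat. 1::real)"
  have t: "inT ?t" using inT_transp[of a "r-2"] a2 a r by simp
  have "pmul ?t (pmul (id, Nn) ?t) = (id, \<lambda>i. if i = a \<or> i = r-1 then -1 else 1)"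
    unfolding pmul_def Nn_def using a2 r by (auto simp: fun_eq_iff transpose_def)
  thus ?thesis using inT_mul[OF t inT_mul[OF inT_Nn t]] by simp
qed

lemma esgn_Na: assumes a: "a < r - 1"
  shows "esgn r (id, \<lambda>i. if i = a \<or> i = r-1 then -1 else 1) = 1"
proof -
  have "(\<Prod>i<r. sg (if i = a \<or> i = r-1 then -1 else 1)) =
      (\<Prod>i<r. (if i = a then -1 else 1) * (if i = r-1 then -1 else 1) :: rat)"
    using a by (intro prod.cong) (auto simp: sg_def)
  also have "\<dots> = 1" using a r by (simp add: prod.distrib)
  finally show ?thesis unfolding esgn_def by simp
qed

lemma inT_signs:
  "\<forall>s. card {i. m \<le> i \<and> i < r - 1 \<and> s i = -1} = k \<longrightarrow> (\<forall>i. s i = 1 \<or> s i = -1) \<longrightarrow>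
     (\<forall>i. (i < m \<or> i \<ge> r) \<longrightarrow> s i = 1) \<longrightarrow> esgn r (id, s) = 1 \<longrightarrow> inT (id, s)"
proof (induction k)
  case 0
  show ?case
  proof (intro allI impI)
    fix s :: "nat \<Rightarrow> real"
    assume c: "card {i. m \<le> i \<and> i < r - 1 \<and> s i = -1} = 0" and pm: "\<forall>i. s i = 1 \<or> s i = -1"
      and out: "\<forall>i. (i < m \<or> i \<ge> r) \<longrightarrow> s i = 1" and e: "esgn r (id, s) = 1"
    have fin: "finite {i. m \<le> i \<and> i < r - 1 \<and> s i = -1}" by simp
    have low: "s i = 1" if "i < r - 1" for i
    proof (cases "i < m")
      case True thus ?thesis using out by auto
    next
      case False
      hence "i \<notin> {i. m \<le> i \<and> i < r - 1 \<and> s i = -1}" using c fin by auto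
      thus ?thesis using pm that False by auto
    qed
    have rr: "r = Suc (r - 1)" using r by simp
    have e': "(\<Prod>i<r. sg (s i)) = 1" using e unfolding esgn_def by simp
    have "(\<Prod>i<r. sg (s i)) = (\<Prod>i<r-1. sg (s i)) * sg (s (r-1))"
      by (subst rr) (simp add: lessThan_Suc)
    also have "(\<Prod>i<r-1. sg (s i)) = 1" using low by (intro prod.neutral) (auto simp: sg_def)
    finally have "sg (s (r-1)) = 1" using e' by simp
    hence "s (r-1) = 1" unfolding sg_def by (auto split: if_splits)
    hence "s = (\<lambda>_. 1)"
    proof -
      assume sr: "s (r-1) = 1"
      have "s i = 1" for i
      proof -
        consider "i < r - 1" | "i = r - 1" | "i \<ge> r" using r by linarith
        thus ?thesis using low sr out by cases auto
      qed
      thus ?thesis by auto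
    qed
    thus "inT (id, s)" using inT_pid unfolding pid_def by simp
  qed
next
  case (Suc k)
  show ?case
  proof (intro allI impI)
    fix s :: "nat \<Rightarrow> real"
    let ?A = "{i. m \<le> i \<and> i < r - 1 \<and> s i = -1}"
    assume c: "card ?A = Suc k" and pm: "\<forall>i. s i = 1 \<or> s i = -1"
      and out: "\<forall>i. (i < m \<or> i \<ge> r) \<longrightarrow> s i = 1" and e: "esgn r (id, s) = 1"
    obtain a where aA: "a \<in> ?A" using c by (metis card.empty ex_in_conv nat.distinct(1))
    have a: "m \<le> a" "a < r - 1" "s a = -1" using aA by auto
    define u where "u = (\<lambda>i::nat. if i = a \<or> i = r-1 then -1 else (1::real))"
    define s' where "s' = (\<lambda>i. u i * s i)"
    have uu: "u i * u i = 1" for i unfolding u_def by auto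
    have ss: "s = (\<lambda>i. u i * s' i)" unfolding s'_def using uu by (auto simp: fun_eq_iff mult.assoc[symmetric])
    have idsp: "(id, s) \<in> SP r" unfolding SP_def using pm out by auto
    have idu: "(id, u) \<in> SP r" unfolding SP_def u_def using a by auto
    have ids': "(id, s') \<in> SP r" unfolding SP_def s'_def u_def using pm out a by auto
    have pm1: "pmul (id, u) (id, s) = (id, s')" unfolding pmul_def s'_def by simp
    have pm2: "pmul (id, u) (id, s') = (id, s)" unfolding pmul_def by (subst ss) simp
    have eu: "esgn r (id, u) = 1" unfolding u_def by (rule esgn_Na[OF a(2)])
    have es': "esgn r (id, s') = 1" using esgn_pmul[OF idu idsp] pm1 eu e by simp
    have A': "{i. m \<le> i \<and> i < r - 1 \<and> s' i = -1} = ?A - {a}"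
      unfolding s'_def u_def using a by auto
    have c': "card {i. m \<le> i \<and> i < r - 1 \<and> s' i = -1} = k"
      unfolding A' using c aA by simp
    have pm': "\<forall>i. s' i = 1 \<or> s' i = -1" using ids' unfolding SP_def by simp
    have out': "\<forall>i. (i < m \<or> i \<ge> r) \<longrightarrow> s' i = 1"
    proof (intro allI impI)
      fix i assume "i < m \<or> i \<ge> r"
      hence "i \<noteq> a" "i \<noteq> r - 1" using a r by auto
      moreover have "s i = 1" using out \<open>i < m \<or> i \<ge> r\<close> by blast
      ultimately show "s' i = 1" unfolding s'_def u_def by simp
    qed
    have "inT (id, s')" using Suc.IH c' pm' out' es' by blast
    moreover have "inT (id, u)" using inT_Na[OF a(1,2)] unfolding u_def .
    ultimately show "inT (id, s)" using inT_mul pm2 by metis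
  qed
qed

lemma inT_Tgt: assumes x: "x \<in> Tgt r m" shows "inT x"
proof -
  have xs: "x \<in> SP r" and e: "esgn r x = 1" and fx: "\<forall>i<m. fst x i = i \<and> snd x i = 1"
    using x unfolding Tgt_def by auto
  have p: "fst x permutes {m..<r}"
    by (rule permutes_superset[OF SP_D(1)[OF xs]]) (use fx in auto)
  have "inT (fst x, \<lambda>_. 1)" by (rule inT_perm[OF p])
  moreover have "inT (id, snd x)"
    using inT_signs[of "card {i. m \<le> i \<and> i < r - 1 \<and> snd x i = -1}"] SP_D(2,3)[OF xs] fx e
    unfolding esgn_def by auto
  moreover have "pmul (fst x, \<lambda>_. 1) (id, snd x) = x" unfolding pmul_def by simp
  ultimately show ?thesis using inT_mul by metis
qed

lemma RG_eq: "refl_group r {m+1..r} = spm r ` Tgt r m"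
proof
  show "refl_group r {m+1..r} \<subseteq> spm r ` Tgt r m" by (rule RG_sub[OF r m])
  show "spm r ` Tgt r m \<subseteq> refl_group r {m+1..r}" using inT_Tgt unfolding inT_def by auto
qed

end


definition key :: "sp \<Rightarrow> nat \<times> real" where "key x = (fst x 0, snd x 0)"
definition act :: "sp \<Rightarrow> nat \<times> real \<Rightarrow> nat \<times> real" where
  "act x k = (fst x (fst k), snd x (fst k) * snd k)"

context
  fixes r :: nat
  assumes r: "r \<ge> 4"
begin

definition "EE = Tgt r 0"
definition "HH = Tgt r 1"
definition "Z k = {z\<in>EE. key z = k}"
definition "Cof k = spm r ` Z k"
definition "VV = {(i, c). i < r \<and> (c = 1 \<or> c = (-1::real))}"

lemma weyl_eq: "weyl_D r = spm r ` EE"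
  using gctx.RG_eq[of r 0] r unfolding weyl_D_def EE_def gctx_def by simp

lemma para_eq: "parabolic_D1 r = spm r ` HH"
  using gctx.RG_eq[of r 1] r unfolding parabolic_D1_def HH_def gctx_def by (simp add: numeral_2_eq_2)

lemma EE_SP: "x \<in> EE \<Longrightarrow> x \<in> SP r" unfolding EE_def by (rule Tgt_SP)
lemma HH_SP: "x \<in> HH \<Longrightarrow> x \<in> SP r" unfolding HH_def by (rule Tgt_SP)
lemma HH_EE: "x \<in> HH \<Longrightarrow> x \<in> EE" unfolding HH_def EE_def Tgt_def by auto

lemma pinv_EE: "x \<in> EE \<Longrightarrow> pinv x \<in> EE"
  unfolding EE_def Tgt_def using pinv_SP esgn_pinv by auto

lemma EE_mul: "x \<in> EE \<Longrightarrow> y \<in> EE \<Longrightarrow> pmul x y \<in> EE"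
  unfolding EE_def by (rule Tgt_pmul)

lemma pinv_cancel: "x \<in> EE \<Longrightarrow> pmul x (pmul (pinv x) z) = z"
  using pinv_right[OF EE_SP] by (simp add: pmul_assoc[symmetric])

lemma pinv_cancel2: "x \<in> EE \<Longrightarrow> pmul (pinv x) (pmul x z) = z"
  using pinv_left[OF EE_SP] by (simp add: pmul_assoc[symmetric])

lemma img_spm: "x \<in> EE \<Longrightarrow> A \<subseteq> EE \<Longrightarrow> (\<lambda>h. spm r x * h) ` (spm r ` A) = spm r ` (pmul x ` A)"
proof -
  assume x: "x \<in> EE" and A: "A \<subseteq> EE"
  have "(\<lambda>h. spm r x * h) ` (spm r ` A) = (\<lambda>y. spm r x * spm r y) ` A" by (simp add: image_image)
  also have "\<dots> = (\<lambda>y. spm r (pmul x y)) ` A"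
    using spm_mult[OF EE_SP[OF x] EE_SP] A by (intro image_cong) auto
  also have "\<dots> = spm r ` (pmul x ` A)" by (simp add: image_image)
  finally show ?thesis .
qed

lemma key_pmul: "key (pmul x y) = act x (key y)"
  unfolding key_def act_def pmul_def by simp

lemma act_pinv: "x \<in> EE \<Longrightarrow> fst k < r \<Longrightarrow> act (pinv x) (act x k) = k"
proof -
  assume x: "x \<in> EE" and k: "fst k < r"
  have p: "fst x permutes {..<r}" using SP_D(1)[OF EE_SP[OF x]] .
  show ?thesis unfolding act_def pinv_def
    using permutes_inverses(2)[OF p] SP_D(6)[OF EE_SP[OF x]] by (simp add: mult.assoc[symmetric] prod_eq_iff)
qed

lemma Z_img: assumes x: "x \<in> EE" and k: "fst k < r" shows "pmul x ` Z k = Z (act x k)"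
proof
  show "pmul x ` Z k \<subseteq> Z (act x k)"
  proof
    fix y assume "y \<in> pmul x ` Z k"
    then obtain z where z: "z \<in> Z k" and y: "y = pmul x z" by blast
    have "z \<in> EE" "key z = k" using z unfolding Z_def by auto
    thus "y \<in> Z (act x k)" unfolding Z_def y using EE_mul[OF x, of z] key_pmul[of x z] by simp
  qed
  show "Z (act x k) \<subseteq> pmul x ` Z k"
  proof
    fix z assume z: "z \<in> Z (act x k)"
    let ?y = "pmul (pinv x) z"
    have "?y \<in> EE" using EE_mul[OF pinv_EE[OF x]] z unfolding Z_def by auto
    moreover have "key ?y = k" using z act_pinv[OF x k] unfolding Z_def by (simp add: key_pmul)
    ultimately have "?y \<in> Z k" unfolding Z_def by simp
    moreover have "z = pmul x ?y" using pinv_cancel[OF x] by simp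
    ultimately show "z \<in> pmul x ` Z k" by blast
  qed
qed

lemma key_EE: assumes z: "z \<in> EE" shows "key z \<in> VV"
proof -
  have "fst z 0 < r" "snd z 0 = 1 \<or> snd z 0 = -1" using SP_D(2,5)[OF EE_SP[OF z]] r by auto
  thus ?thesis unfolding VV_def key_def by simp
qed

lemma act_VV: assumes x: "x \<in> EE" and k: "k \<in> VV" shows "act x k \<in> VV"
proof -
  obtain i c where kic: "k = (i, c)" and i: "i < r" and c: "c = 1 \<or> c = -1" using k unfolding VV_def by auto
  have "fst x i < r" "snd x i = 1 \<or> snd x i = -1" using SP_D(2,5)[OF EE_SP[OF x]] i by auto
  thus ?thesis unfolding VV_def act_def kic using c i by auto
qed

lemma VV_key: assumes k: "k \<in> VV" shows "\<exists>z\<in>EE. key z = k"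
proof -
  obtain i c where kic: "k = (i, c)" and i: "i < r" and c: "c = 1 \<or> c = -1" using k unfolding VV_def by auto
  define z where "z = (transpose 0 i, \<lambda>j::nat. if j = 0 \<or> j = 1 then c else 1)"
  have zs: "z \<in> SP r" unfolding z_def SP_def using c i r by (auto intro: permutes_swap_id)
  have "esgn r z = (\<Prod>j<r. (if j = 0 then sg c else 1) * (if j = 1 then sg c else 1))"
    unfolding esgn_def z_def by (intro prod.cong) (auto simp: sg_def)
  also have "\<dots> = sg c * sg c" using r by (simp add: prod.distrib)
  also have "\<dots> = 1" by (rule sg_sq)
  finally have "z \<in> EE" unfolding EE_def Tgt_def using zs by simp
  moreover have "key z = k" unfolding key_def z_def kic by simp
  ultimately show ?thesis by blast
qed

lemma coset_eq: assumes x: "x \<in> EE" shows "(\<lambda>h. spm r x * h) ` parabolic_D1 r = Cof (key x)"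
proof -
  have eqZ: "pmul x ` HH = Z (key x)"
  proof
    show "pmul x ` HH \<subseteq> Z (key x)"
    proof
      fix z assume "z \<in> pmul x ` HH"
      then obtain y where y: "y \<in> HH" and z: "z = pmul x y" by auto
      have "y \<in> Tgt r 1" using y unfolding HH_def .
      hence "fst y 0 = 0" "snd y 0 = 1" unfolding Tgt_def by auto
      thus "z \<in> Z (key x)" unfolding Z_def z using EE_mul[OF x HH_EE[OF y]]
        by (simp add: key_def pmul_def)
    qed
    show "Z (key x) \<subseteq> pmul x ` HH"
    proof
      fix z assume z: "z \<in> Z (key x)"
      let ?y = "pmul (pinv x) z"
      have yE: "?y \<in> EE" using EE_mul[OF pinv_EE[OF x]] z unfolding Z_def by auto
      have kz: "key z = key x" using z unfolding Z_def by simp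
      have "key ?y = act (pinv x) (act x (0, 1))"
        unfolding key_pmul kz by (simp add: key_def act_def)
      also have "\<dots> = (0, 1)" using act_pinv[OF x, of "(0,1)"] r by simp
      finally have "?y \<in> HH" using yE unfolding HH_def EE_def Tgt_def key_def by auto
      moreover have "z = pmul x ?y" using pinv_cancel[OF x] by simp
      ultimately show "z \<in> pmul x ` HH" by blast
    qed
  qed
  have sub: "HH \<subseteq> EE" using HH_EE by blast
  show ?thesis unfolding para_eq Cof_def img_spm[OF x sub] eqZ ..
qed

lemma cosets_eq: "left_cosets_D1 r = Cof ` VV"
proof
  show "left_cosets_D1 r \<subseteq> Cof ` VV"
  proof
    fix C assume "C \<in> left_cosets_D1 r"
    then obtain g where g: "g \<in> weyl_D r" and C: "C = (\<lambda>h. g * h) ` parabolic_D1 r"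
      unfolding left_cosets_D1_def by blast
    obtain x where x: "x \<in> EE" and gx: "g = spm r x" using g unfolding weyl_eq by blast
    have "C = Cof (key x)" unfolding C gx by (rule coset_eq[OF x])
    thus "C \<in> Cof ` VV" using key_EE[OF x] by blast
  qed
  show "Cof ` VV \<subseteq> left_cosets_D1 r"
  proof
    fix C assume "C \<in> Cof ` VV"
    then obtain k where k: "k \<in> VV" and C: "C = Cof k" by blast
    obtain z where z: "z \<in> EE" and kz: "key z = k" using VV_key[OF k] by blast
    have "C = (\<lambda>h. spm r z * h) ` parabolic_D1 r" unfolding C kz[symmetric] coset_eq[OF z] ..
    moreover have "spm r z \<in> weyl_D r" unfolding weyl_eq using z by blast
    ultimately show "C \<in> left_cosets_D1 r" unfolding left_cosets_D1_def by blast
  qed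
qed

lemma act_Cof: assumes w: "w \<in> EE" and k: "k \<in> VV"
  shows "(\<lambda>h. spm r w * h) ` Cof k = Cof (act w k)"
proof -
  have fk: "fst k < r" using k unfolding VV_def by auto
  have "Z k \<subseteq> EE" unfolding Z_def by auto
  thus ?thesis unfolding Cof_def using img_spm[OF w] Z_img[OF w fk] by simp
qed

lemma Cof_inj: assumes k: "k \<in> VV" and k': "k' \<in> VV" and eq: "Cof k = Cof k'" shows "k = k'"
proof -
  obtain z where z: "z \<in> EE" "key z = k" using VV_key[OF k] by blast
  have "spm r z \<in> Cof k'" using eq z unfolding Cof_def Z_def by auto
  then obtain z' where z': "z' \<in> Z k'" "spm r z = spm r z'" unfolding Cof_def by auto
  have "z = z'" using spm_inj[OF EE_SP[OF z(1)] _ z'(2)] z'(1) EE_SP unfolding Z_def by auto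
  thus ?thesis using z z'(1) unfolding Z_def by simp
qed

lemma fixed_cosets: assumes w: "w \<in> EE"
  shows "card {C \<in> left_cosets_D1 r. (\<lambda>h. spm r w * h) ` C = C} = 2 * ff r w"
proof -
  have "{C \<in> left_cosets_D1 r. (\<lambda>h. spm r w * h) ` C = C} = Cof ` {k \<in> VV. act w k = k}"
  proof
    show "{C \<in> left_cosets_D1 r. (\<lambda>h. spm r w * h) ` C = C} \<subseteq> Cof ` {k \<in> VV. act w k = k}"
    proof
      fix C assume "C \<in> {C \<in> left_cosets_D1 r. (\<lambda>h. spm r w * h) ` C = C}"
      hence C1: "C \<in> Cof ` VV" and C2: "(\<lambda>h. spm r w * h) ` C = C" unfolding cosets_eq by auto
      obtain k where k: "k \<in> VV" and C: "C = Cof k" using C1 by blast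
      have "Cof (act w k) = Cof k" using C2 act_Cof[OF w k] C by simp
      hence "act w k = k" using Cof_inj[OF act_VV[OF w k] k] by simp
      thus "C \<in> Cof ` {k \<in> VV. act w k = k}" using k C by blast
    qed
    show "Cof ` {k \<in> VV. act w k = k} \<subseteq> {C \<in> left_cosets_D1 r. (\<lambda>h. spm r w * h) ` C = C}"
    proof
      fix C assume "C \<in> Cof ` {k \<in> VV. act w k = k}"
      then obtain k where k: "k \<in> VV" and ak: "act w k = k" and C: "C = Cof k" by blast
      have "(\<lambda>h. spm r w * h) ` C = C" unfolding C act_Cof[OF w k] ak ..
      moreover have "C \<in> left_cosets_D1 r" unfolding cosets_eq using k C by blast
      ultimately show "C \<in> {C \<in> left_cosets_D1 r. (\<lambda>h. spm r w * h) ` C = C}" by blast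
    qed
  qed
  moreover have "inj_on Cof {k \<in> VV. act w k = k}" using Cof_inj by (auto intro: inj_onI)
  moreover have "{k \<in> VV. act w k = k} = {i. i < r \<and> fst w i = i \<and> snd w i = 1} \<times> {1, -1}"
    unfolding VV_def act_def by auto
  ultimately have "card {C \<in> left_cosets_D1 r. (\<lambda>h. spm r w * h) ` C = C} = card ({i. i < r \<and> fst w i = i \<and> snd w i = 1} \<times> {1, -1::real})"
    by (simp add: card_image)
  also have "\<dots> = ff r w * 2" unfolding ff_def by (simp add: card_cartesian_product)
  finally show ?thesis by simp
qed

end


theorem proposition4p4:
  fixes r :: nat
  assumes "r \<ge> 4"
  shows "card (weyl_D r) = 2 ^ (r - 1) * fact r
    \<and> P_S1 r = Polynomial.smult (1 / of_nat (card (weyl_D r)))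
        ([:-1, 1:] * [:of_nat ((r - 1) * (2 * r - 3)), of_nat (2 * r - 1):]
         * (\<Prod>a = 1..r - 2. [:of_nat (2 * a - 1), 1:]))"
proof -
  have r: "r \<ge> 4" by (rule assms)
  have EE: "EE r = EP r" unfolding EE_def[OF r] EP_Tgt ..
  have W: "weyl_D r = spm r ` EP r" using weyl_eq[OF r] unfolding EE .
  have inj: "inj_on (spm r) (EP r)"
  proof (rule inj_onI)
    fix x y assume x: "x \<in> EP r" and y: "y \<in> EP r" and e: "spm r x = spm r y"
    have "x \<in> SP r" "y \<in> SP r" using x y unfolding EP_def by auto
    thus "x = y" using spm_inj e by blast
  qed
  have card: "card (weyl_D r) = 2 ^ (r - 1) * fact r"
    unfolding W card_image[OF inj] using card_EP[of r] r by simp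
  have chi: "chi_sigma_S1 r (spm r x) = int (2 * ff r x) - 1" if x: "x \<in> EP r" for x
    unfolding chi_sigma_S1_def using fixed_cosets[OF r, of x] x EE by simp
  have "(\<Sum>w\<in>weyl_D r. Polynomial.smult (of_int (chi_sigma_S1 r w)) (monom 1 (fixdim r w)))
      = (\<Sum>x\<in>EP r. Polynomial.smult (of_int (chi_sigma_S1 r (spm r x))) (monom 1 (fixdim r (spm r x))))"
    unfolding W by (rule sum.reindex[OF inj, unfolded o_def])
  also have "\<dots> = (\<Sum>x\<in>EP r. monom (2 * of_nat (ff r x) - 1) (dd r x))"
  proof (rule sum.cong[OF refl])
    fix x assume x: "x \<in> EP r"
    show "Polynomial.smult (of_int (chi_sigma_S1 r (spm r x))) (monom 1 (fixdim r (spm r x))) =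
      monom (2 * of_nat (ff r x) - 1) (dd r x)"
      unfolding chi[OF x] fixdim_def dd_def[symmetric] smult_monom by simp
  qed
  also have "\<dots> = FF r + FE r - Polynomial.smult (1/2) (AA r + AE r)" by (rule EP_poly)
  also have "\<dots> = [:-1, 1:] * [:of_nat ((r - 1) * (2 * r - 3)), of_nat (2 * r - 1):]
         * (\<Prod>a = 1..r - 2. [:of_nat (2 * a - 1), 1:])"
  proof -
    obtain m where m: "r = Suc (Suc m)" using r by (metis add_2_eq_Suc le_Suc_ex numeral_2_eq_2 le_trans Suc_leD numeral_Bit0 add_2_eq_Suc' trans_le_add1 nat_le_iff_add numeral_le_iff semiring_norm(69) order_trans)
    show ?thesis unfolding m using T_closed[of m] AA_prod[of m] by simp
  qed
  finally have S: "(\<Sum>w\<in>weyl_D r. Polynomial.smult (of_int (chi_sigma_S1 r w)) (monom 1 (fixdim r w)))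
     = ([:-1, 1:] * [:of_nat ((r - 1) * (2 * r - 3)), of_nat (2 * r - 1):]
         * (\<Prod>a = 1..r - 2. [:of_nat (2 * a - 1), 1:]) :: rat poly)" .
  show ?thesis using card unfolding P_S1_def S by simp
qed


end
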